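(* Let $r\ge3$ be odd and work with coefficients in $\mathbb{Z}[1/\tilde r!]$. The linear map $\Phi\colon\mathrm{N}(\partial\triangle_+^{r-1})\to\overline{W}_*(r)$ defined below is a chain map.
   Context: $\tilde r=(r-1)/2$. $\mathbb{C}_r=\langle\rho\mid\rho^r\rangle$ is identified with $\{0,\dots,r-1\}$ (addition mod $r$); $N=\sum_j\rho^j$, $T=\rho-1$. $\mathrm{N}(\partial\triangle_+^{r-1})$: free module on symbols $[a_0,\dots,a_{q-1}]$ with distinct entries in $\{0,\dots,r-1\}$, $0\le q\le r-1$, in degree $q$ (the empty symbol $\emptyset$ in degree $0$), with $[a_{\pi(0)},\dots,a_{\pi(q-1)}]=(-1)^{\mathrm{sgn}\,\pi}[a_0,\dots,a_{q-1}]$ and $\partial[a_0,\dots,a_{q-1}]=\sum_i(-1)^i[a_0,\dots,\widehat{a_i},\dots,a_{q-1}]$. $\overline{W}_*(r)$: degree $0$ is the free module on $e_0$ with trivial $\mathbb{C}_r$-action; degree $q\ge1$ is the free $R[\mathbb{C}_r]$-module on $e_q$; $\partial(\rho^je_1)=e_0$, and for $q\ge2$, $\partial e_q=Te_{q-1}$ if $q$ is even, $\partial e_q=Ne_{q-1}$ if $q$ is odd. For $a,b\in\{0,\dots,r-1\}$ let $d(a,b)\in\{1,\dots,r\}$ be the integer congruent to $b-a$ mod $r$. A sequence $(a_0,\dots,a_{q-1})$ of distinct elements, $q\ge1$, is cyclically ordered if $\sum_{i=0}^{q-1}d(a_i,a_{i+1})=r$, where $a_q:=a_0$. Then $a_i$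 is called even (resp. odd) in the sequence if $d(a_i,a_{i+1})$ is even (resp. odd). Set $\phi_e(a,b)=\sum_{i=1}^{d(a,b)/2}\rho^{a+2i}$ if $d(a,b)$ is even, $0$ otherwise; $\phi_o(a,b)=\sum_{i=1}^{(d(a,b)-1)/2}\rho^{a+2i+1}$ if $d(a,b)$ is odd, $0$ otherwise. For a cyclically ordered sequence $A=(a_0,\dots,a_{q-1})$: $\Phi_e(A)=(-1)^{j+1}\phi_e(a_j,a_{j+1})e_q$ if $A$ has exactly one even entry $a_j$, and $0$ otherwise; $\Phi_o(A)=\sum_{j=0}^{q-1}\phi_o(a_j,a_{j+1})e_q$ if $A$ has no even entry, and $0$ otherwise. With $\varphi(q)=\lfloor(r-q-1)/2\rfloor$, set $\Phi(\emptyset)=e_0$, $\Phi(A)=\frac{\varphi(q)!}{\tilde r!}\Phi_e(A)$ for $q\ge2$ even, and $\Phi(A)=\frac{\varphi(q)!}{\tilde r!}\Phi_o(A)$ for $q$ odd. On a generator $[a_0,\dots,a_{q-1}]$, $\Phi$ is defined as $(-1)^{\mathrm{sgn}\,\pi}\Phi(a_{\pi(0)},\dots,a_{\pi(q-1)})$ for any permutation $\pi$ making $(a_{\pi(0)},\dots,a_{\pi(q-1)})$ cyclically ordered (the paper asserts this is independent of the choice), and extended linearly. *)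

theory Defs
  imports Complex_Main "HOL-Combinatorics.Permutations"
begin

text \<open>Coefficients: Z[1/rt!] is realised inside the rationals.
  An element of the group ring R[C_r] (i.e. of Wbar_q, q >= 1, written in the basis
  rho^j e_q, 0 <= j < r) is a function nat => rat, supported on {..<r}, giving the
  coefficient of rho^j.  Wbar_0 = R e_0 is encoded as the multiples of the indicator of 0.\<close>

definition rt :: "nat \<Rightarrow> nat" where
  "rt r = (r - 1) div 2"

definition grp_rho :: "nat \<Rightarrow> nat \<Rightarrow> nat \<Rightarrow> rat" where
  "grp_rho r a = (\<lambda>j. if j = a mod r then 1 else 0)"

definition scale :: "rat \<Rightarrow> (nat \<Rightarrow> rat) \<Rightarrow> nat \<Rightarrow> rat" where
  "scale c x = (\<lambda>j. c * x j)"

definition dd :: "nat \<Rightarrow> nat \<Rightarrow> nat \<Rightarrow> nat" where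
  "dd r a b = (if (b + r - a) mod r = 0 then r else (b + r - a) mod r)"

definition cyc_next :: "nat \<Rightarrow> nat list \<Rightarrow> nat \<Rightarrow> nat" where
  "cyc_next r A i = dd r (A ! i) (A ! ((i + 1) mod length A))"

definition cyclically_ordered :: "nat \<Rightarrow> nat list \<Rightarrow> bool" where
  "cyclically_ordered r A \<longleftrightarrow> A \<noteq> [] \<and> distinct A \<and>
     (\<Sum>i<length A. cyc_next r A i) = r"

definition even_entry :: "nat \<Rightarrow> nat list \<Rightarrow> nat \<Rightarrow> bool" where
  "even_entry r A i \<longleftrightarrow> i < length A \<and> even (cyc_next r A i)"

definition phi_e :: "nat \<Rightarrow> nat \<Rightarrow> nat \<Rightarrow> nat \<Rightarrow> rat" where
  "phi_e r a b = (if even (dd r a b)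
     then (\<lambda>k. \<Sum>i=1..dd r a b div 2. grp_rho r (a + 2 * i) k) else (\<lambda>_. 0))"

definition phi_o :: "nat \<Rightarrow> nat \<Rightarrow> nat \<Rightarrow> nat \<Rightarrow> rat" where
  "phi_o r a b = (if odd (dd r a b)
     then (\<lambda>k. \<Sum>i=1..(dd r a b - 1) div 2. grp_rho r (a + 2 * i + 1) k) else (\<lambda>_. 0))"

definition Phi_e :: "nat \<Rightarrow> nat list \<Rightarrow> nat \<Rightarrow> rat" where
  "Phi_e r A = (if card {j. even_entry r A j} = 1
     then (let j = (THE j. even_entry r A j) in
           scale ((-1) ^ (j + 1)) (phi_e r (A ! j) (A ! ((j + 1) mod length A))))
     else (\<lambda>_. 0))"

definition Phi_o :: "nat \<Rightarrow> nat list \<Rightarrow> nat \<Rightarrow> rat" where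
  "Phi_o r A = (if (\<forall>j. \<not> even_entry r A j)
     then (\<lambda>k. \<Sum>j<length A. phi_o r (A ! j) (A ! ((j + 1) mod length A)) k)
     else (\<lambda>_. 0))"

definition varphi :: "nat \<Rightarrow> nat \<Rightarrow> nat" where
  "varphi r q = (r - q - 1) div 2"

definition e0 :: "nat \<Rightarrow> nat \<Rightarrow> rat" where
  "e0 r = grp_rho r 0"

definition Phi_cyc :: "nat \<Rightarrow> nat list \<Rightarrow> nat \<Rightarrow> rat" where
  "Phi_cyc r A = (if A = [] then e0 r
     else scale (of_nat (fact (varphi r (length A))) / of_nat (fact (rt r)))
       (if even (length A) then Phi_e r A else Phi_o r A))"

definition permute_list_by :: "(nat \<Rightarrow> nat) \<Rightarrow> nat list \<Rightarrow> nat list" where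
  "permute_list_by p a = map (\<lambda>i. a ! p i) [0..<length a]"

definition Phi :: "nat \<Rightarrow> nat list \<Rightarrow> nat \<Rightarrow> rat" where
  "Phi r a = (if a = [] then e0 r else
     (let p = (SOME p. p permutes {..<length a} \<and>
                       cyclically_ordered r (permute_list_by p a))
      in scale (of_int (sign p)) (Phi_cyc r (permute_list_by p a))))"

definition Phi_of_boundary :: "nat \<Rightarrow> nat list \<Rightarrow> nat \<Rightarrow> rat" where
  "Phi_of_boundary r a =
     (\<lambda>k. \<Sum>i<length a. (-1) ^ i * Phi r (take i a @ drop (Suc i) a) k)"

definition bdW :: "nat \<Rightarrow> nat \<Rightarrow> (nat \<Rightarrow> rat) \<Rightarrow> nat \<Rightarrow> rat" where
  "bdW r q x =
     (if q = 0 then (\<lambda>_. 0)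
      else if q = 1 then (\<lambda>j. if j = 0 then (\<Sum>k<r. x k) else 0)
      else if even q then (\<lambda>j. if j < r then x ((j + r - 1) mod r) - x j else 0)
      else (\<lambda>j. if j < r then (\<Sum>k<r. x k) else 0))"

end

theory Submission
  imports Defs "HOL-Combinatorics.Cycles" "HOL-Number_Theory.Cong"
begin

lemma dd_formula:
  assumes "a < r" "b < r"
  shows "dd r a b = (if a < b then b - a else r + b - a)"
proof (cases "a < b")
  case True
  then have e: "b + r - a = (b - a) + r" by simp
  have "(b - a) + r = r + (b - a)" by simp
  then have "((b - a) + r) mod r = (b - a) mod r" by (metis mod_add_self1)
  also have "\<dots> = b - a" using assms by (intro mod_less) simp
  finally have m: "(b + r - a) mod r = b - a" using e by simp
  have "b - a \<noteq> 0" using True by simp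
  then show ?thesis using True m unfolding dd_def by simp
next
  case False
  show ?thesis
  proof (cases "a = b")
    case True then show ?thesis unfolding dd_def by simp
  next
    case False
    with \<open>\<not> a < b\<close> have "b < a" by simp
    then have "r + b - a < r" using assms by simp
    then have "(r + b - a) mod r = r + b - a" by (rule mod_less)
    moreover have "b + r - a = r + b - a" by simp
    ultimately have "(b + r - a) mod r = r + b - a" by simp
    moreover have "r + b - a \<noteq> 0" using assms by simp
    ultimately show ?thesis using \<open>b < a\<close> unfolding dd_def by simp
  qed
qed


lemma dd_pos: "a < r \<Longrightarrow> b < r \<Longrightarrow> 1 \<le> dd r a b" by (simp add: dd_formula, linarith)
lemma dd_le: "a < r \<Longrightarrow> b < r \<Longrightarrow> dd r a b \<le> r" by (simp add: dd_formula, linarith)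

lemma dd_mod: assumes "a < r" "b < r" shows "(a + dd r a b) mod r = b"
proof (cases "a < b")
  case True then show ?thesis using assms by (simp add: dd_formula)
next
  case False
  then have "a + dd r a b = b + r" using assms by (simp add: dd_formula)
  then show ?thesis using assms by simp
qed

lemma dd_unique:
  assumes "a < r" "b < r" "1 \<le> n" "n \<le> r" "(a + n) mod r = b"
  shows "dd r a b = n"
proof (cases "a < b")
  case True
  show ?thesis
  proof (cases "a + n < r")
    case True then show ?thesis using assms \<open>a < b\<close> by (simp add: dd_formula)
  next
    case False
    then have "a + n = (a + n - r) + r" by simp
    then have "(a + n) mod r = (a + n - r) mod r" by (metis mod_add_self2)
    moreover have "a + n - r < r" using assms by simp
    ultimately have "b = a + n - r" using assms by simp
    then show ?thesis using assms \<open>a < b\<close> by simp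
  qed
next
  case False
  show ?thesis
  proof (cases "a + n < r")
    case True then show ?thesis using assms False by simp
  next
    case False
    then have "a + n = (a + n - r) + r" by simp
    then have "(a + n) mod r = (a + n - r) mod r" by (metis mod_add_self2)
    moreover have "a + n - r < r" using assms by simp
    ultimately have "b = a + n - r" using assms by simp
    then show ?thesis using assms \<open>\<not> a < b\<close> False by (simp add: dd_formula)
  qed
qed


lemma sum_shift_mod: "(\<Sum>i<n. f (Suc i mod n)) = (\<Sum>i<n. (f i :: 'a :: comm_monoid_add))"
proof (cases n)
  case 0 then show ?thesis by simp
next
  case (Suc m)
  have "(\<Sum>i<Suc m. f (Suc i mod Suc m)) = (\<Sum>i<m. f (Suc i mod Suc m)) + f (Suc m mod Suc m)"
    by simp
  also have "(\<Sum>i<m. f (Suc i mod Suc m)) = (\<Sum>i<m. f (Suc i))"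
    by (intro sum.cong) auto
  also have "f (Suc m mod Suc m) = f 0" by simp
  also have "(\<Sum>i<m. f (Suc i)) + f 0 = (\<Sum>i<Suc m. f i)"
    by (subst sum.lessThan_Suc_shift) (simp add: add.commute)
  finally show ?thesis using Suc by simp
qed

lemma cyc_next_rotate1:
  assumes "i < length A"
  shows "cyc_next r (rotate1 A) i = cyc_next r A (Suc i mod length A)"
proof -
  have q: "length A > 0" using assms by (cases A) auto
  have "rotate1 A ! ((i + 1) mod length A) = A ! (Suc ((i+1) mod length A) mod length A)"
    using q by (simp add: nth_rotate1)
  also have "Suc ((i+1) mod length A) mod length A = (Suc i mod length A + 1) mod length A"
    by (simp add: mod_Suc_eq)
  finally show ?thesis unfolding cyc_next_def using assms by (simp add: nth_rotate1)
qed

lemma cyc_rotate1: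
  assumes "cyclically_ordered r A"
  shows "cyclically_ordered r (rotate1 A)"
proof -
  have "(\<Sum>i<length A. cyc_next r (rotate1 A) i) = (\<Sum>i<length A. cyc_next r A (Suc i mod length A))"
    by (intro sum.cong) (auto simp: cyc_next_rotate1)
  also have "\<dots> = (\<Sum>i<length A. cyc_next r A i)" by (rule sum_shift_mod)
  finally show ?thesis using assms unfolding cyclically_ordered_def by simp
qed

lemma cyc_rotate:
  assumes "cyclically_ordered r A"
  shows "cyclically_ordered r (rotate n A)"
  by (induction n) (auto simp: assms cyc_rotate1)

lemma even_entry_rotate1:
  "even_entry r (rotate1 A) j \<longleftrightarrow> j < length A \<and> even_entry r A (Suc j mod length A)"
proof -
  have "j < length A \<Longrightarrow> Suc j mod length A < length A" by (cases A) auto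
  then show ?thesis unfolding even_entry_def using cyc_next_rotate1[of j A r] by auto
qed

lemma card_even_entry_rotate1:
  "card {j. even_entry r (rotate1 A) j} = card {j. even_entry r A j}"
proof (cases "A = []")
  case True then show ?thesis by (simp add: even_entry_def)
next
  case False
  let ?q = "length A"
  have qp: "?q > 0" using False by simp
  have "bij_betw (\<lambda>j. Suc j mod ?q) {j. even_entry r (rotate1 A) j} {j. even_entry r A j}"
  proof (rule bij_betw_imageI)
    show "inj_on (\<lambda>j. Suc j mod ?q) {j. even_entry r (rotate1 A) j}"
    proof (rule inj_onI)
      fix x y assume x: "x \<in> {j. even_entry r (rotate1 A) j}" and y: "y \<in> {j. even_entry r (rotate1 A) j}"
        and e: "Suc x mod ?q = Suc y mod ?q"
      have "x < ?q" "y < ?q" using x y by (auto simp: even_entry_def)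
      then show "x = y" using e
        by (auto simp: mod_Suc split: if_splits)
    qed
    show "(\<lambda>j. Suc j mod ?q) ` {j. even_entry r (rotate1 A) j} = {j. even_entry r A j}"
    proof
      show "(\<lambda>j. Suc j mod ?q) ` {j. even_entry r (rotate1 A) j} \<subseteq> {j. even_entry r A j}"
        by (auto simp: even_entry_rotate1)
      show "{j. even_entry r A j} \<subseteq> (\<lambda>j. Suc j mod ?q) ` {j. even_entry r (rotate1 A) j}"
      proof
        fix j0 assume j0: "j0 \<in> {j. even_entry r A j}"
        then have lt: "j0 < ?q" by (simp add: even_entry_def)
        define j1 where "j1 = (j0 + ?q - 1) mod ?q"
        have "Suc j1 mod ?q = j0"
        proof (cases j0)
          case 0 then show ?thesis using qp unfolding j1_def by (simp add: mod_Suc)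
        next
          case (Suc k) then show ?thesis using lt unfolding j1_def
            by (simp add: mod_Suc)
        qed
        have "j1 < ?q" using qp unfolding j1_def by simp
        show "j0 \<in> (\<lambda>j. Suc j mod ?q) ` {j. even_entry r (rotate1 A) j}"
        proof (rule image_eqI[of _ _ j1])
          show "j0 = Suc j1 mod ?q" using \<open>Suc j1 mod ?q = j0\<close> by simp
          show "j1 \<in> {j. even_entry r (rotate1 A) j}"
            using j0 \<open>Suc j1 mod ?q = j0\<close> \<open>j1 < ?q\<close> by (simp add: even_entry_rotate1)
        qed
      qed
    qed
  qed
  then show ?thesis by (rule bij_betw_same_card)
qed

lemma rot_index:
  assumes "j0 < q" "j < q"
  shows "(Suc j mod q = j0) \<longleftrightarrow> (j = (j0 + q - 1) mod q)"
proof (cases j0)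
  case 0
  then show ?thesis using assms by (auto simp: mod_Suc)
next
  case (Suc k)
  then have "(j0 + q - 1) mod q = k" using assms by simp
  then show ?thesis using assms Suc by (auto simp: mod_Suc)
qed

lemma Phi_e_single:
  assumes "{j. even_entry r A j} = {j0}"
  shows "Phi_e r A = scale ((-1)^(j0+1)) (phi_e r (A!j0) (A!((j0+1) mod length A)))"
proof -
  have c: "card {j. even_entry r A j} = 1" using assms by simp
  have "(THE j. even_entry r A j) = j0"
    using assms by (intro the_equality) auto
  then show ?thesis unfolding Phi_e_def using c by (simp add: Let_def)
qed

lemma Phi_e_zero: "card {j. even_entry r A j} \<noteq> 1 \<Longrightarrow> Phi_e r A = (\<lambda>_. 0)"
  unfolding Phi_e_def by simp

lemma Phi_e_rotate1:
  assumes "A \<noteq> []" "even (length A)"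
  shows "Phi_e r (rotate1 A) k = - Phi_e r A k"
proof (cases "card {j. even_entry r A j} = 1")
  case True
  let ?q = "length A"
  have qp: "?q > 0" using assms by simp
  obtain j0 where S: "{j. even_entry r A j} = {j0}" using True card_1_singletonE by blast
  have j0q: "j0 < ?q" using S by (auto simp: even_entry_def)
  define j1 where "j1 = (j0 + ?q - 1) mod ?q"
  have j1q: "j1 < ?q" using qp unfolding j1_def by simp
  have sj1: "Suc j1 mod ?q = j0" using rot_index[OF j0q j1q] unfolding j1_def by simp
  have S1: "{j. even_entry r (rotate1 A) j} = {j1}"
  proof -
    have "even_entry r (rotate1 A) j \<longleftrightarrow> j = j1" for j
    proof -
      have "even_entry r (rotate1 A) j \<longleftrightarrow> j < ?q \<and> Suc j mod ?q = j0"
        unfolding even_entry_rotate1 using S by auto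
      also have "\<dots> \<longleftrightarrow> j = j1" using rot_index[OF j0q, of j] j1q unfolding j1_def by auto
      finally show ?thesis .
    qed
    then show ?thesis by auto
  qed
  have e1: "rotate1 A ! j1 = A ! j0" using j1q sj1 by (simp add: nth_rotate1)
  have "(j1 + 1) mod ?q < ?q" using qp by simp
  then have e2: "rotate1 A ! ((j1 + 1) mod length (rotate1 A)) = A ! ((j0 + 1) mod ?q)"
    using sj1 by (simp add: nth_rotate1 mod_Suc_eq)
  have sg: "((-1::rat)^(j1+1)) = - ((-1)^(j0+1))"
  proof (cases j0)
    case 0
    then have "j1 = ?q - 1" using qp unfolding j1_def by simp
    then have "j1 + 1 = ?q" using qp by simp
    then show ?thesis using 0 assms(2) by simp
  next
    case (Suc m)
    then have "j1 = m" using j0q unfolding j1_def by simp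
    then show ?thesis using Suc by simp
  qed
  show ?thesis
    unfolding Phi_e_single[OF S1] Phi_e_single[OF S] e1 e2 scale_def sg by simp
next
  case False
  then show ?thesis using card_even_entry_rotate1[of r A] by (simp add: Phi_e_zero)
qed

lemma Phi_o_rotate1:
  assumes "A \<noteq> []"
  shows "Phi_o r (rotate1 A) k = Phi_o r A k"
proof -
  let ?q = "length A"
  have qp: "?q > 0" using assms by simp
  have iff: "(\<forall>j. \<not> even_entry r (rotate1 A) j) \<longleftrightarrow> (\<forall>j. \<not> even_entry r A j)"
  proof
    assume H: "\<forall>j. \<not> even_entry r (rotate1 A) j"
    show "\<forall>j. \<not> even_entry r A j"
    proof (intro allI notI)
      fix j0 assume E: "even_entry r A j0"
      then have j0q: "j0 < ?q" by (simp add: even_entry_def)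
      define j1 where "j1 = (j0 + ?q - 1) mod ?q"
      have j1q: "j1 < ?q" using qp unfolding j1_def by simp
      have "Suc j1 mod ?q = j0" using rot_index[OF j0q j1q] unfolding j1_def by simp
      then have "even_entry r (rotate1 A) j1" using E j1q by (simp add: even_entry_rotate1)
      then show False using H by simp
    qed
  next
    assume H: "\<forall>j. \<not> even_entry r A j"
    then show "\<forall>j. \<not> even_entry r (rotate1 A) j" by (simp add: even_entry_rotate1)
  qed
  have sm: "(\<Sum>j<?q. phi_o r (rotate1 A ! j) (rotate1 A ! ((j + 1) mod ?q)) k)
      = (\<Sum>j<?q. phi_o r (A ! (Suc j mod ?q)) (A ! ((Suc j mod ?q + 1) mod ?q)) k)"
  proof (intro sum.cong refl)
    fix j assume "j \<in> {..<?q}"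
    then have "j < ?q" "(j+1) mod ?q < ?q" using qp by auto
    then show "phi_o r (rotate1 A ! j) (rotate1 A ! ((j + 1) mod ?q)) k
        = phi_o r (A ! (Suc j mod ?q)) (A ! ((Suc j mod ?q + 1) mod ?q)) k"
      by (simp add: nth_rotate1 mod_Suc_eq)
  qed
  also have "\<dots> = (\<Sum>j<?q. phi_o r (A ! j) (A ! ((j + 1) mod ?q)) k)"
    using sum_shift_mod[of "\<lambda>i. phi_o r (A ! i) (A ! ((i + 1) mod ?q)) k" ?q] by simp
  finally show ?thesis unfolding Phi_o_def using iff by auto
qed

lemma Phi_cyc_rotate1:
  assumes "A \<noteq> []"
  shows "Phi_cyc r (rotate1 A) k = (-1)^(length A - 1) * Phi_cyc r A k"
proof (cases "even (length A)")
  case True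
  then have "(-1::rat)^(length A - 1) = -1" using assms
    by (metis One_nat_def Suc_pred dvd_imp_le even_Suc length_greater_0_conv neg_one_odd_power odd_one)
  then show ?thesis using True assms Phi_e_rotate1[OF assms True, of r k]
    unfolding Phi_cyc_def scale_def by simp
next
  case False
  then have "(-1::rat)^(length A - 1) = 1" using assms
    by (simp add: neg_one_even_power)
  then show ?thesis using False assms Phi_o_rotate1[OF assms, of r k]
    unfolding Phi_cyc_def scale_def by simp
qed

lemma Phi_cyc_rotate:
  assumes "A \<noteq> []"
  shows "Phi_cyc r (rotate n A) k = (-1)^(n * (length A - 1)) * Phi_cyc r A k"
proof (induction n)
  case 0 then show ?case by simp
next
  case (Suc n)
  have "rotate n A \<noteq> []" using assms by simp
  then show ?case using Suc Phi_cyc_rotate1[of "rotate n A" r k]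
    by (simp add: power_add)
qed


definition desc :: "nat list \<Rightarrow> nat set" where
  "desc A = {i. i < length A \<and> A ! (Suc i mod length A) \<le> A ! i}"

lemma cyc_next_int:
  assumes "set A \<subseteq> {..<r}" "i < length A"
  shows "int (cyc_next r A i) = int (A ! (Suc i mod length A)) - int (A ! i)
            + (if i \<in> desc A then int r else 0)"
proof -
  have q: "length A > 0" using assms by auto
  have a: "A ! i < r" using assms nth_mem by blast
  have m: "Suc i mod length A < length A" using q by simp
  have b: "A ! (Suc i mod length A) < r" using assms(1) nth_mem[OF m] by auto
  show ?thesis unfolding cyc_next_def desc_def using a b assms(2) by (auto simp: dd_formula)
qed

lemma cyc_sum_desc:
  assumes "A \<noteq> []" "set A \<subseteq> {..<r}"
  shows "int (\<Sum>i<length A. cyc_next r A i) = int r * int (card (desc A))"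
proof -
  let ?q = "length A"
  have "int (\<Sum>i<?q. cyc_next r A i) = (\<Sum>i<?q. int (cyc_next r A i))" by simp
  also have "\<dots> = (\<Sum>i<?q. (int (A ! (Suc i mod ?q)) - int (A ! i))
            + (if i \<in> desc A then int r else 0))"
    using assms by (intro sum.cong refl) (simp add: cyc_next_int)
  also have "\<dots> = (\<Sum>i<?q. int (A ! (Suc i mod ?q))) - (\<Sum>i<?q. int (A ! i))
            + (\<Sum>i<?q. if i \<in> desc A then int r else 0)"
    by (simp add: sum.distrib sum_subtractf)
  also have "(\<Sum>i<?q. int (A ! (Suc i mod ?q))) = (\<Sum>i<?q. int (A ! i))"
    by (rule sum_shift_mod)
  also have "(\<Sum>i<?q. if i \<in> desc A then int r else 0) = (\<Sum>i\<in>{..<?q} \<inter> desc A. int r)"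
    using sum.inter_restrict[of "{..<?q}" "\<lambda>_. int r" "desc A"] by simp
  also have "{..<?q} \<inter> desc A = desc A" by (auto simp: desc_def)
  finally show ?thesis by simp
qed

lemma cyc_iff_desc:
  assumes "A \<noteq> []" "set A \<subseteq> {..<r}" "distinct A" "r > 0"
  shows "cyclically_ordered r A \<longleftrightarrow> card (desc A) = 1"
proof -
  have "(\<Sum>i<length A. cyc_next r A i) = r \<longleftrightarrow> int r * int (card (desc A)) = int r"
    using cyc_sum_desc[OF assms(1,2)] by linarith
  also have "\<dots> \<longleftrightarrow> card (desc A) = 1" using assms(4) by simp
  finally show ?thesis using assms unfolding cyclically_ordered_def by simp
qed

lemma sorted_cyc:
  assumes "sorted_wrt (<) A" "A \<noteq> []" "set A \<subseteq> {..<r}"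
  shows "cyclically_ordered r A"
proof -
  let ?q = "length A"
  have r: "r > 0" using assms by (cases A) auto
  have d: "distinct A" using assms strict_sorted_iff by blast
  have "desc A = {?q - 1}"
  proof
    show "desc A \<subseteq> {?q - 1}"
    proof
      fix i assume i: "i \<in> desc A"
      then have iq: "i < ?q" by (simp add: desc_def)
      show "i \<in> {?q - 1}"
      proof (rule ccontr)
        assume "i \<notin> {?q - 1}"
        then have "Suc i < ?q" using iq by simp
        then have "A ! i < A ! Suc i" using assms(1) sorted_wrt_nth_less by blast
        then show False using i \<open>Suc i < ?q\<close> by (simp add: desc_def)
      qed
    qed
    show "{?q - 1} \<subseteq> desc A"
    proof -
      have q: "?q > 0" using assms by simp
      have "Suc (?q - 1) mod ?q = 0" using q by simp
      moreover have "A ! 0 \<le> A ! (?q - 1)"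
      proof (cases "?q = 1")
        case True then show ?thesis by simp
      next
        case False
        have "0 < ?q - 1" using q False by linarith
        then show ?thesis using assms(1) sorted_wrt_nth_less[OF assms(1), of 0 "?q - 1"] q by simp
      qed
      ultimately show ?thesis using q by (simp add: desc_def)
    qed
  qed
  then show ?thesis using cyc_iff_desc[OF assms(2,3) d r] by simp
qed

lemma cyc_rotate_sorted:
  assumes "cyclically_ordered r A" "set A \<subseteq> {..<r}"
  shows "\<exists>n. sorted_wrt (<) (rotate n A)"
proof -
  let ?q = "length A"
  have ne: "A \<noteq> []" and d: "distinct A" using assms unfolding cyclically_ordered_def by auto
  have q: "?q > 0" using ne by simp
  have r: "r > 0" using assms ne by (cases A) auto
  have "card (desc A) = 1" using cyc_iff_desc[OF ne assms(2) d r] assms(1) by simp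
  then obtain dd0 where D: "desc A = {dd0}" using card_1_singletonE by blast
  have dq: "dd0 < ?q" using D by (auto simp: desc_def)
  let ?B = "rotate (Suc dd0) A"
  have "sorted_wrt (<) ?B"
  proof (subst sorted_wrt_iff_nth_Suc_transp, simp add: transp_def, intro allI impI)
    fix i assume i: "Suc i < length ?B"
    then have iq: "Suc i < ?q" by simp
    define t where "t = (Suc dd0 + i) mod ?q"
    have tq: "t < ?q" using q unfolding t_def by simp
    have st: "Suc t mod ?q = (Suc dd0 + Suc i) mod ?q" unfolding t_def by (simp add: mod_Suc_eq)
    have "t \<noteq> dd0"
    proof
      assume "t = dd0"
      then have E: "(Suc dd0 + i) mod ?q = dd0" unfolding t_def by simp
      show False
      proof (cases "Suc dd0 + i < ?q")
        case True then show False using E by simp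
      next
        case False
        then have "Suc dd0 + i - ?q < ?q" using dq iq by simp
        then have "(Suc dd0 + i) mod ?q = Suc dd0 + i - ?q" using False by (simp add: mod_if)
        then show False using E iq False by simp
      qed
    qed
    then have "t \<notin> desc A" using D by auto
    then have "A ! t < A ! (Suc t mod ?q)" using tq by (auto simp: desc_def)
    moreover have "?B ! i = A ! t" unfolding t_def by (rule nth_rotate) (use iq in simp)
    moreover have "?B ! Suc i = A ! ((Suc dd0 + Suc i) mod ?q)" by (rule nth_rotate) (use iq in simp)
    then have "?B ! Suc i = A ! (Suc t mod ?q)" using st by simp
    ultimately show "?B ! i < ?B ! Suc i" by simp
  qed
  then show ?thesis by blast
qed

lemma rotate_inverse_ex: "\<exists>m. rotate m (rotate n xs) = xs"
proof (cases "xs = []")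
  case True then show ?thesis by simp
next
  case False
  let ?q = "length xs"
  have "rotate (?q - n mod ?q) (rotate n xs) = rotate (?q - n mod ?q + n) xs" by (simp add: rotate_rotate)
  also have "(?q - n mod ?q + n) mod ?q = 0"
  proof -
    have "n mod ?q < ?q" using False by simp
    have "?q - n mod ?q + n = ?q - n mod ?q + n mod ?q + ?q * (n div ?q)" by simp
    also have "\<dots> = ?q * (Suc (n div ?q))" using \<open>n mod ?q < ?q\<close> by simp
    finally show ?thesis by simp
  qed
  then have "rotate (?q - n mod ?q + n) xs = xs" by simp
  finally show ?thesis by blast
qed

lemma cyc_same_set:
  assumes "cyclically_ordered r b" "cyclically_ordered r c" "set b = set c" "set b \<subseteq> {..<r}"
  shows "\<exists>m. c = rotate m b"
proof -
  obtain n1 where s1: "sorted_wrt (<) (rotate n1 b)" using cyc_rotate_sorted assms by blast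
  obtain n2 where s2: "sorted_wrt (<) (rotate n2 c)" using cyc_rotate_sorted assms by blast
  have "rotate n2 c = rotate n1 b" using strict_sorted_equal[OF s1 s2] assms(3) by simp
  obtain m where "rotate m (rotate n2 c) = c" using rotate_inverse_ex by blast
  then have "c = rotate m (rotate n1 b)" using \<open>rotate n2 c = rotate n1 b\<close> by simp
  then show ?thesis by (simp add: rotate_rotate) blast
qed


lemma sign_cycle: "distinct cs \<Longrightarrow> sign (cycle_of_list cs) = (-1)^(length cs - 1)"
proof (induction cs rule: cycle_of_list.induct)
  case (1 i j cs)
  have "sign (cycle_of_list (i # j # cs)) = sign (transpose i j) * sign (cycle_of_list (j # cs))"
    by (simp add: sign_compose permutation_swap_id permutation_of_cycle)
  also have "\<dots> = - ((-1)^(length cs))" using 1 by (simp add: sign_swap_id)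
  finally show ?case by (simp del: cycle_of_list.simps)
qed simp_all

definition rotp :: "nat \<Rightarrow> nat \<Rightarrow> nat" where "rotp q = cycle_of_list [0..<q]"

lemma rotp_permutes: "rotp q permutes {..<q}"
  using cycle_permutes[of "[0..<q]"] unfolding rotp_def by (simp add: atLeast0LessThan)

lemma rotp_funpow_permutes: "(rotp q ^^ m) permutes {..<q}"
proof (induction m)
  case 0 show ?case using permutes_id[of "{..<q}"] by (simp add: id_def)
next
  case (Suc m)
  have "rotp q ^^ Suc m = rotp q \<circ> (rotp q ^^ m)" by simp
  then show ?case using permutes_compose[OF Suc rotp_permutes] by (simp only: funpow.simps(2))
qed

lemma sign_rotp_funpow: "sign (rotp q ^^ m) = (-1)^(m * (q - 1))"
proof (induction m)
  case 0 then show ?case by simp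
next
  case (Suc m)
  have pm: "permutation (rotp q ^^ m)"
    using permutes_imp_permutation[OF _ rotp_funpow_permutes] by simp
  have p1: "permutation (rotp q)"
    using permutes_imp_permutation[OF _ rotp_permutes] by simp
  have "sign (rotp q ^^ Suc m) = sign (rotp q) * sign (rotp q ^^ m)"
    by (simp add: sign_compose pm p1)
  also have "sign (rotp q) = (-1)^(q - 1)" unfolding rotp_def by (simp add: sign_cycle)
  finally show ?case using Suc by (simp add: power_add)
qed

lemma permute_rotp: "length b = q \<Longrightarrow> permute_list (rotp q ^^ m) b = rotate m b"
proof -
  assume l: "length b = q"
  have "permute_list (rotp q ^^ m) b = map (nth b) (map (rotp q ^^ m) [0..<q])"
    unfolding permute_list_def using l by simp
  also have "map (rotp q ^^ m) [0..<q] = rotate m [0..<q]"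
    unfolding rotp_def by (rule cyclic_rotation) simp
  also have "map (nth b) (rotate m [0..<q]) = rotate m (map (nth b) [0..<q])"
    by (simp add: rotate_map)
  also have "map (nth b) [0..<q] = b" using l map_nth[of b] by simp
  finally show ?thesis .
qed

lemma permute_list_by_eq: "permute_list_by = permute_list"
  by (intro ext) (simp add: permute_list_by_def permute_list_def)

lemma permute_list_inj:
  assumes "p permutes {..<length b}" "p' permutes {..<length b}" "distinct b"
    "permute_list p b = permute_list p' b"
  shows "p = p'"
proof
  fix x
  show "p x = p' x"
  proof (cases "x < length b")
    case True
    have "b ! p x = b ! p' x"
      using assms(4) permute_list_nth[OF assms(1) True] permute_list_nth[OF assms(2) True] by metis
    moreover have "p x < length b" "p' x < length b"
      using True permutes_in_image[OF assms(1)] permutes_in_image[OF assms(2)] by auto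
    ultimately show ?thesis using assms(3) nth_eq_iff_index_eq by blast
  next
    case False
    then show ?thesis using permutes_not_in[OF assms(1)] permutes_not_in[OF assms(2)] by simp
  qed
qed

lemma Phi_cyc_perm:
  assumes "cyclically_ordered r b" "set b \<subseteq> {..<r}" "\<sigma> permutes {..<length b}"
    "cyclically_ordered r (permute_list \<sigma> b)"
  shows "Phi_cyc r (permute_list \<sigma> b) k = of_int (sign \<sigma>) * Phi_cyc r b k"
proof -
  have ne: "b \<noteq> []" and d: "distinct b" using assms(1) unfolding cyclically_ordered_def by auto
  have "set (permute_list \<sigma> b) = set b" using assms(3) by simp
  then obtain m where m: "permute_list \<sigma> b = rotate m b"
    using cyc_same_set[OF assms(1) assms(4)] assms(2) by metis
  have "permute_list (rotp (length b) ^^ m) b = rotate m b" by (rule permute_rotp) simp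
  then have "\<sigma> = rotp (length b) ^^ m"
    using permute_list_inj[OF assms(3) rotp_funpow_permutes d] m by simp
  then have s: "sign \<sigma> = (-1)^(m * (length b - 1))" by (simp add: sign_rotp_funpow)
  show ?thesis unfolding m s using Phi_cyc_rotate[OF ne] by simp
qed

lemma Phi_eq:
  assumes "distinct a" "a \<noteq> []" "set a \<subseteq> {..<r}" "p permutes {..<length a}"
    "cyclically_ordered r (permute_list p a)"
  shows "Phi r a k = of_int (sign p) * Phi_cyc r (permute_list p a) k"
proof -
  define p0 where "p0 = (SOME p. p permutes {..<length a} \<and> cyclically_ordered r (permute_list p a))"
  have v0: "p0 permutes {..<length a} \<and> cyclically_ordered r (permute_list p0 a)"
    unfolding p0_def by (rule someI[of _ p]) (use assms in simp)
  have Phi0: "Phi r a k = of_int (sign p0) * Phi_cyc r (permute_list p0 a) k"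
    unfolding Phi_def p0_def[symmetric] permute_list_by_eq using assms(2) v0
    by (simp add: scale_def p0_def permute_list_by_eq Let_def)
  define \<sigma> where "\<sigma> = inv p0 \<circ> p"
  have sp: "\<sigma> permutes {..<length a}" unfolding \<sigma>_def
    using v0 assms(4) by (intro permutes_compose permutes_inv) auto
  have p0p: "p0 permutes {..<length a}" using v0 by simp
  have "p0 \<circ> \<sigma> = p" unfolding \<sigma>_def using permutes_inv_o(1)[OF p0p] by (simp add: o_assoc)
  then have "permute_list \<sigma> (permute_list p0 a) = permute_list p a"
    using permute_list_compose[of \<sigma> a p0] sp by simp
  then have W: "Phi_cyc r (permute_list p a) k = of_int (sign \<sigma>) * Phi_cyc r (permute_list p0 a) k"
    using Phi_cyc_perm[of r "permute_list p0 a" \<sigma> k] v0 assms sp by simp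
  have perm0: "permutation p0" using v0 permutes_imp_permutation by blast
  have perm: "permutation p" using assms(4) permutes_imp_permutation by blast
  have sgs: "sign \<sigma> = sign p0 * sign p" unfolding \<sigma>_def
    by (simp add: sign_compose sign_inverse perm0 perm permutation_inverse)
  then have "of_int (sign p) * Phi_cyc r (permute_list p a) k
      = of_int (sign p * sign p) * of_int (sign p0) * Phi_cyc r (permute_list p0 a) k"
  proof -
    have "rat_of_int (sign p) * rat_of_int (sign p) = 1"
      by (metis of_int_mult of_int_1 sign_idempotent)
    then show ?thesis using W sgs by (simp add: algebra_simps)
  qed
  also have "sign p * sign p = 1" by simp
  finally show ?thesis using Phi0 by simp
qed

lemma exists_valid:
  assumes "distinct a" "a \<noteq> []" "set a \<subseteq> {..<r}"
  shows "\<exists>p. p permutes {..<length a} \<and> cyclically_ordered r (permute_list p a)"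
proof -
  let ?S = "sorted_list_of_set (set a)"
  have sS: "sorted_wrt (<) ?S" by simp
  have dS: "distinct ?S" by simp
  have setS: "set ?S = set a" by simp
  have "mset ?S = mset a" using set_eq_iff_mset_eq_distinct[OF dS assms(1)] setS by simp
  then obtain p where p: "p permutes {..<length a}" "permute_list p a = ?S"
    using mset_eq_permutation by metis
  have "?S \<noteq> []" using assms(2) setS by auto
  then have "cyclically_ordered r ?S" using sorted_cyc[OF sS] setS assms(3) by simp
  then show ?thesis using p by metis
qed

lemma Phi_perm:
  assumes "distinct a" "set a \<subseteq> {..<r}" "\<sigma> permutes {..<length a}"
  shows "Phi r (permute_list \<sigma> a) k = of_int (sign \<sigma>) * Phi r a k"
proof (cases "a = []")
  case True
  then have "\<sigma> = id" using assms(3) by simp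
  then show ?thesis using True by simp
next
  case False
  obtain p where p: "p permutes {..<length a}" "cyclically_ordered r (permute_list p a)"
    using exists_valid[OF assms(1) False assms(2)] by blast
  let ?a' = "permute_list \<sigma> a"
  define p' where "p' = inv \<sigma> \<circ> p"
  have sp: "p' permutes {..<length a}" unfolding p'_def
    using p assms(3) by (intro permutes_compose permutes_inv) auto
  have "\<sigma> \<circ> p' = p" unfolding p'_def using permutes_inv_o(1)[OF assms(3)] by (simp add: o_assoc)
  then have e: "permute_list p' ?a' = permute_list p a"
    using permute_list_compose[of p' a \<sigma>] sp by simp
  have d': "distinct ?a'" using assms by simp
  have s': "set ?a' \<subseteq> {..<r}" using assms by simp
  have n': "?a' \<noteq> []" using False by (simp add: permute_list_def)
  have "Phi r ?a' k = of_int (sign p') * Phi_cyc r (permute_list p a) k"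
    using Phi_eq[OF d' n' s', of p' k] sp p e by simp
  moreover have "sign p' = sign \<sigma> * sign p"
  proof -
    have perm: "permutation p" using p permutes_imp_permutation by blast
    have perms: "permutation \<sigma>" using assms(3) permutes_imp_permutation by blast
    show ?thesis unfolding p'_def
      by (simp add: sign_compose sign_inverse perm perms permutation_inverse)
  qed
  moreover have "Phi r a k = of_int (sign p) * Phi_cyc r (permute_list p a) k"
    using Phi_eq[OF assms(1) False assms(2) p] .
  ultimately show ?thesis by simp
qed


definition del :: "nat \<Rightarrow> nat list \<Rightarrow> nat list" where
  "del i a = take i a @ drop (Suc i) a"

lemma length_del: "i < length a \<Longrightarrow> length (del i a) = length a - 1"
  unfolding del_def by simp

lemma nth_del: "i < length a \<Longrightarrow> j < length a - 1 \<Longrightarrow>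
    del i a ! j = a ! (if j < i then j else Suc j)"
  unfolding del_def by (auto simp: nth_append min_def)

lemma set_del: "set (del i a) \<subseteq> set a"
  unfolding del_def using set_take_subset set_drop_subset by fastforce

lemma distinct_del: "distinct a \<Longrightarrow> distinct (del i a)"
  unfolding del_def using set_take_disj_set_drop_if_distinct[of a i "Suc i"] by auto

lemma PB_def': "Phi_of_boundary r a k = (\<Sum>i<length a. (-1)^i * Phi r (del i a) k)"
  unfolding Phi_of_boundary_def del_def by simp

lemma del_swap_lt:
  assumes "i < k" "Suc k < length a"
  shows "del i (permute_list (transpose k (Suc k)) a)
       = permute_list (transpose (k - 1) k) (del i a)"
proof -
  have p1: "transpose k (Suc k) permutes {..<length a}" using assms by (intro permutes_swap_id) auto
  have p2: "transpose (k - 1) k permutes {..<length (del i a)}"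
    using assms by (intro permutes_swap_id) (auto simp: length_del)
  show ?thesis
  proof (rule nth_equalityI)
    show "length (del i (permute_list (transpose k (Suc k)) a)) =
          length (permute_list (transpose (k - 1) k) (del i a))" using assms by (simp add: length_del)
    fix j assume j: "j < length (del i (permute_list (transpose k (Suc k)) a))"
    then have jq: "j < length a - 1" using assms by (simp add: length_del)
    have tj: "transpose (k - 1) k j < length a - 1" using jq assms by (auto simp: transpose_def)
    have jj: "(if j < i then j else Suc j) < length a" using jq by auto
    have "del i (permute_list (transpose k (Suc k)) a) ! j
        = a ! (transpose k (Suc k) (if j < i then j else Suc j))"
      using jq assms by (simp add: nth_del permute_list_nth[OF p1 jj])
    moreover have "permute_list (transpose (k - 1) k) (del i a) ! j
        = a ! (if transpose (k - 1) k j < i then transpose (k - 1) k j else Suc (transpose (k - 1) k j))"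
    proof -
      have jd: "j < length (del i a)" using jq assms by (simp add: length_del)
      have "permute_list (transpose (k - 1) k) (del i a) ! j = del i a ! (transpose (k - 1) k j)"
        by (rule permute_list_nth[OF p2 jd])
      then show ?thesis using tj assms by (simp add: nth_del)
    qed
    moreover have "transpose k (Suc k) (if j < i then j else Suc j)
        = (if transpose (k - 1) k j < i then transpose (k - 1) k j else Suc (transpose (k - 1) k j))"
      using assms by (auto simp: transpose_def)
    ultimately show "del i (permute_list (transpose k (Suc k)) a) ! j =
          permute_list (transpose (k - 1) k) (del i a) ! j" by simp
  qed
qed

lemma del_swap_gt:
  assumes "Suc k < i" "i < length a"
  shows "del i (permute_list (transpose k (Suc k)) a)
       = permute_list (transpose k (Suc k)) (del i a)"
proof -
  have p1: "transpose k (Suc k) permutes {..<length a}" using assms by (intro permutes_swap_id) auto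
  have p2: "transpose k (Suc k) permutes {..<length (del i a)}"
    using assms by (intro permutes_swap_id) (auto simp: length_del)
  show ?thesis
  proof (rule nth_equalityI)
    show "length (del i (permute_list (transpose k (Suc k)) a)) =
          length (permute_list (transpose k (Suc k)) (del i a))" using assms by (simp add: length_del)
    fix j assume j: "j < length (del i (permute_list (transpose k (Suc k)) a))"
    then have jq: "j < length a - 1" using assms by (simp add: length_del)
    have tj: "transpose k (Suc k) j < length a - 1" using jq assms by (auto simp: transpose_def)
    have jj: "(if j < i then j else Suc j) < length a" using jq by auto
    have "del i (permute_list (transpose k (Suc k)) a) ! j
        = a ! (transpose k (Suc k) (if j < i then j else Suc j))"
      using jq assms by (simp add: nth_del permute_list_nth[OF p1 jj])
    moreover have "permute_list (transpose k (Suc k)) (del i a) ! j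
        = a ! (if transpose k (Suc k) j < i then transpose k (Suc k) j else Suc (transpose k (Suc k) j))"
      using jq assms tj by (simp add: nth_del permute_list_nth[OF p2] length_del)
    moreover have "transpose k (Suc k) (if j < i then j else Suc j)
        = (if transpose k (Suc k) j < i then transpose k (Suc k) j else Suc (transpose k (Suc k) j))"
      using assms by (auto simp: transpose_def)
    ultimately show "del i (permute_list (transpose k (Suc k)) a) ! j =
          permute_list (transpose k (Suc k)) (del i a) ! j" by simp
  qed
qed

lemma del_swap_k:
  assumes "Suc k < length a"
  shows "del k (permute_list (transpose k (Suc k)) a) = del (Suc k) a"
proof -
  have p1: "transpose k (Suc k) permutes {..<length a}" using assms by (intro permutes_swap_id) auto
  show ?thesis
  proof (rule nth_equalityI)
    show "length (del k (permute_list (transpose k (Suc k)) a)) = length (del (Suc k) a)"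
      using assms by (simp add: length_del)
    fix j assume j: "j < length (del k (permute_list (transpose k (Suc k)) a))"
    then have jq: "j < length a - 1" using assms by (simp add: length_del)
    then show "del k (permute_list (transpose k (Suc k)) a) ! j = del (Suc k) a ! j"
      using assms by (cases "j < k"; cases "j = k"; auto simp: nth_del permute_list_nth[OF p1] transpose_def)
  qed
qed

lemma del_swap_Suc_k:
  assumes "Suc k < length a"
  shows "del (Suc k) (permute_list (transpose k (Suc k)) a) = del k a"
proof -
  have p1: "transpose k (Suc k) permutes {..<length a}" using assms by (intro permutes_swap_id) auto
  show ?thesis
  proof (rule nth_equalityI)
    show "length (del (Suc k) (permute_list (transpose k (Suc k)) a)) = length (del k a)"
      using assms by (simp add: length_del)
    fix j assume j: "j < length (del (Suc k) (permute_list (transpose k (Suc k)) a))"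
    then have jq: "j < length a - 1" using assms by (simp add: length_del)
    then show "del (Suc k) (permute_list (transpose k (Suc k)) a) ! j = del k a ! j"
      using assms by (cases "j < k"; cases "j = k"; auto simp: nth_del permute_list_nth[OF p1] transpose_def)
  qed
qed

lemma sign_transpose_rat: "a \<noteq> b \<Longrightarrow> (of_int (sign (transpose a b)) :: rat) = -1"
  by (simp add: sign_swap_id)

lemma PB_swap:
  assumes "distinct a" "set a \<subseteq> {..<r}" "Suc k < length a"
  shows "Phi_of_boundary r (permute_list (transpose k (Suc k)) a) j = - Phi_of_boundary r a j"
proof -
  let ?t = "transpose k (Suc k)"
  let ?a' = "permute_list ?t a"
  let ?q = "length a"
  define f where "f i = (-1::rat)^i * Phi r (del i a) j" for i
  have pt: "?t permutes {..<?q}" using assms by (intro permutes_swap_id) auto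
  have key: "(-1)^i * Phi r (del i ?a') j = - f (?t i)" if i: "i < ?q" for i
  proof -
    consider "i < k" | "i = k" | "i = Suc k" | "Suc k < i" by linarith
    then show ?thesis
    proof cases
      case 1
      have pp: "transpose (k - 1) k permutes {..<length (del i a)}"
        using assms 1 by (intro permutes_swap_id) (auto simp: length_del)
      have "Phi r (del i ?a') j = - Phi r (del i a) j"
      proof -
        have kk: "k - 1 \<noteq> k" using 1 by simp
        have "set (del i a) \<subseteq> {..<r}" using set_del[of i a] assms(2) by blast
        then show ?thesis
          using Phi_perm[OF distinct_del[OF assms(1)] _ pp, of r j] sign_transpose_rat[OF kk]
            del_swap_lt[OF 1 assms(3)] by simp
      qed
      then show ?thesis using 1 unfolding f_def by simp
    next
      case 2
      then show ?thesis unfolding f_def using del_swap_k[OF assms(3)] by simp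
    next
      case 3
      then show ?thesis unfolding f_def using del_swap_Suc_k[OF assms(3)] by simp
    next
      case 4
      have pp: "?t permutes {..<length (del i a)}"
        using assms 4 i by (intro permutes_swap_id) (auto simp: length_del)
      have "Phi r (del i ?a') j = - Phi r (del i a) j"
        unfolding del_swap_gt[OF 4 i]
        using Phi_perm[OF distinct_del[OF assms(1)] _ pp, of r j] set_del[of i a] assms(2)
        by (simp add: sign_swap_id)
      then show ?thesis using 4 unfolding f_def by simp
    qed
  qed
  have "Phi_of_boundary r ?a' j = (\<Sum>i<?q. - f (?t i))"
    unfolding PB_def' by (simp add: key)
  also have "\<dots> = - (\<Sum>i<?q. (f \<circ> ?t) i)" by (simp add: sum_negf)
  also have "(\<Sum>i<?q. (f \<circ> ?t) i) = (\<Sum>i<?q. f i)" using sum.permute[OF pt, of f] by simp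
  also have "(\<Sum>i<?q. f i) = Phi_of_boundary r a j" unfolding PB_def' f_def by simp
  finally show ?thesis .
qed

lemma bdW_neg: "bdW r q (\<lambda>j. - x j) j = - bdW r q x j"
  unfolding bdW_def by (simp add: sum_negf)

lemma main_swap:
  assumes "distinct a" "set a \<subseteq> {..<r}" "Suc k < length a"
    "Phi_of_boundary r (permute_list (transpose k (Suc k)) a)
       = bdW r (length a) (Phi r (permute_list (transpose k (Suc k)) a))"
  shows "Phi_of_boundary r a = bdW r (length a) (Phi r a)"
proof
  fix j
  let ?t = "transpose k (Suc k)"
  have pt: "?t permutes {..<length a}" using assms by (intro permutes_swap_id) auto
  have "(\<lambda>j. Phi r (permute_list ?t a) j) = (\<lambda>j. - Phi r a j)"
    using Phi_perm[OF assms(1,2) pt] by (simp add: sign_swap_id)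
  then have "bdW r (length a) (Phi r (permute_list ?t a)) j = - bdW r (length a) (Phi r a) j"
    using bdW_neg[of r "length a" "Phi r a" j] by (metis)
  moreover have "Phi_of_boundary r (permute_list ?t a) j = - Phi_of_boundary r a j"
    using PB_swap[OF assms(1-3)] .
  ultimately show "Phi_of_boundary r a j = bdW r (length a) (Phi r a) j"
    using assms(4) by (metis neg_equal_iff_equal)
qed


definition pot :: "nat list \<Rightarrow> nat" where "pot a = (\<Sum>i<length a. i * a ! i)"

lemma pot_bound:
  assumes "set a \<subseteq> {..<r}"
  shows "pot a \<le> length a * length a * r"
proof -
  have "pot a \<le> (\<Sum>i<length a. length a * r)"
    unfolding pot_def
  proof (rule sum_mono)
    fix i assume i: "i \<in> {..<length a}"
    then have "a ! i < r" using assms nth_mem by fastforce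
    moreover have "i \<le> length a" using i by simp
    ultimately show "i * a ! i \<le> length a * r" by (simp add: mult_le_mono)
  qed
  then show ?thesis by simp
qed

lemma pot_swap:
  assumes "Suc k < length a"
  shows "pot (permute_list (transpose k (Suc k)) a) + a ! Suc k = pot a + a ! k"
proof -
  let ?t = "transpose k (Suc k)"
  let ?q = "length a"
  have pt: "?t permutes {..<?q}" using assms by (intro permutes_swap_id) auto
  have "pot (permute_list ?t a) = (\<Sum>i<?q. i * a ! (?t i))"
    unfolding pot_def by (intro sum.cong) (auto simp: permute_list_nth[OF pt])
  also have "\<dots> = (\<Sum>i<?q. ((\<lambda>i. i * a ! (?t i)) \<circ> ?t) i)"
    using sum.permute[OF pt, of "\<lambda>i. i * a ! (?t i)"] by simp
  also have "\<dots> = (\<Sum>i<?q. ?t i * a ! i)" by simp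
  finally have e: "pot (permute_list ?t a) = (\<Sum>i<?q. ?t i * a ! i)" .
  have "(\<Sum>i<?q. ?t i * a ! i + (if i = Suc k then a ! i else 0))
      = (\<Sum>i<?q. i * a ! i + (if i = k then a ! i else 0))"
    by (intro sum.cong refl) (auto simp: transpose_def)
  then have "(\<Sum>i<?q. ?t i * a ! i) + a ! Suc k = pot a + a ! k"
    using assms unfolding pot_def by (simp add: sum.distrib)
  then show ?thesis using e by simp
qed

lemma not_sorted_desc:
  fixes a :: "nat list"
  assumes "distinct a" "\<not> sorted_wrt (<) a"
  shows "\<exists>k. Suc k < length a \<and> a ! Suc k < a ! k"
proof -
  have "\<not> (\<forall>i. Suc i < length a \<longrightarrow> a ! i < a ! Suc i)"
  proof -
    have "transp ((<) :: nat \<Rightarrow> nat \<Rightarrow> bool)" by (auto simp: transp_def)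
    from sorted_wrt_iff_nth_Suc_transp[OF this, of a] assms(2) show ?thesis by simp
  qed
  then obtain k where k: "Suc k < length a" "\<not> a ! k < a ! Suc k" by blast
  have "a ! k \<noteq> a ! Suc k" using assms(1) k(1) nth_eq_iff_index_eq by fastforce
  then show ?thesis using k by (intro exI[of _ k]) simp
qed

lemma reduce_to_sorted:
  assumes H: "\<And>b. sorted_wrt (<) b \<Longrightarrow> set b \<subseteq> {..<r} \<Longrightarrow> length b = q \<Longrightarrow>
      Phi_of_boundary r b = bdW r q (Phi r b)"
    and a: "distinct a" "set a \<subseteq> {..<r}" "length a = q"
  shows "Phi_of_boundary r a = bdW r (length a) (Phi r a)"
proof -
  have "\<forall>a. distinct a \<and> set a \<subseteq> {..<r} \<and> length a = q \<and> q * q * r - pot a = n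
      \<longrightarrow> Phi_of_boundary r a = bdW r (length a) (Phi r a)" for n
  proof (induction n rule: less_induct)
    case (less n)
    show ?case
    proof (intro allI impI)
      fix a assume A: "distinct a \<and> set a \<subseteq> {..<r} \<and> length a = q \<and> q * q * r - pot a = n"
      show "Phi_of_boundary r a = bdW r (length a) (Phi r a)"
      proof (cases "sorted_wrt (<) a")
        case True then show ?thesis using H A by simp
      next
        case False
        obtain k where k: "Suc k < length a" "a ! Suc k < a ! k"
          using not_sorted_desc[OF _ False] A by blast
        let ?a' = "permute_list (transpose k (Suc k)) a"
        have pt: "transpose k (Suc k) permutes {..<length a}" using k by (intro permutes_swap_id) auto
        have d': "distinct ?a'" "set ?a' \<subseteq> {..<r}" "length ?a' = q" using A pt by auto
        have "pot ?a' > pot a" using pot_swap[OF k(1)] k(2) by simp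
        moreover have "pot ?a' \<le> q * q * r" using pot_bound[OF d'(2)] d'(3) by simp
        ultimately have "q * q * r - pot ?a' < n" using A by linarith
        then have "Phi_of_boundary r ?a' = bdW r (length ?a') (Phi r ?a')"
          using less d' by blast
        then show ?thesis using main_swap[OF _ _ k(1)] A by simp
      qed
    qed
  qed
  then show ?thesis using a by blast
qed


lemma sum_shift_periodic:
  fixes f :: "nat \<Rightarrow> 'a :: cancel_comm_monoid_add"
  assumes "\<And>x. f (x + q) = f x"
  shows "(\<Sum>i<q. f (m + i)) = (\<Sum>i<q. f i)"
proof (induction m)
  case 0 then show ?case by simp
next
  case (Suc m)
  have A: "(\<Sum>i<Suc q. f (m + i)) = f (m + 0) + (\<Sum>i<q. f (m + Suc i))"
    by (rule sum.lessThan_Suc_shift)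
  have B: "(\<Sum>i<Suc q. f (m + i)) = (\<Sum>i<q. f (m + i)) + f (m + q)" by simp
  have "f (m + q) = f (m + 0)" using assms by simp
  then have "f (m + 0) + (\<Sum>i<q. f (m + Suc i)) = f (m + 0) + (\<Sum>i<q. f (m + i))"
    using A B by (simp add: add.commute)
  then have "(\<Sum>i<q. f (m + Suc i)) = (\<Sum>i<q. f (m + i))" by simp
  then show ?case using Suc by simp
qed

locale cycb =
  fixes r :: nat and b :: "nat list"
  assumes r3: "r \<ge> 3" and rodd: "odd r" and cb: "cyclically_ordered r b"
    and sb: "set b \<subseteq> {..<r}" and lb: "length b \<le> r - 1"
begin

definition q where "q = length b"
definition B where "B m = b ! (m mod q)"
definition G where "G m = dd r (B m) (B (Suc m))"
definition c where "c m = butlast (rotate m b)"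

lemma q_pos: "q > 0" using cb unfolding q_def cyclically_ordered_def by simp
lemma r_pos: "r > 0" using r3 by simp
lemma b_ne: "b \<noteq> []" using cb unfolding cyclically_ordered_def by simp
lemma b_dist: "distinct b" using cb unfolding cyclically_ordered_def by simp

lemma B_lt: "B m < r"
proof -
  have "m mod q < length b" using q_pos unfolding q_def by simp
  then have "b ! (m mod q) \<in> set b" by (rule nth_mem)
  then show ?thesis using sb unfolding B_def by auto
qed

lemma B_add_q: "B (m + q) = B m" unfolding B_def by simp
lemma B_mod: "B (m mod q) = B m" unfolding B_def by simp
lemma G_add_q: "G (m + q) = G m" unfolding G_def using B_add_q[of "Suc m"] B_add_q[of m] by simp
lemma G_mod: "G (m mod q) = G m"
  unfolding G_def B_def by (simp add: mod_Suc_eq)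
lemma G_pos: "1 \<le> G m" unfolding G_def using B_lt dd_pos by blast
lemma G_le: "G m \<le> r" unfolding G_def using B_lt dd_le by blast
lemma BG: "(B m + G m) mod r = B (Suc m)" unfolding G_def using B_lt dd_mod by blast

lemma cyc_next_b: "i < q \<Longrightarrow> cyc_next r b i = G i"
  unfolding cyc_next_def G_def B_def q_def by simp

lemma sumG: "(\<Sum>i<q. G i) = r"
proof -
  have "(\<Sum>i<q. G i) = (\<Sum>i<q. cyc_next r b i)" by (intro sum.cong) (auto simp: cyc_next_b)
  then show ?thesis using cb unfolding cyclically_ordered_def q_def by simp
qed

lemma sumG_shift: "(\<Sum>i<q. G (m + i)) = r"
  using sum_shift_periodic[of G q m] G_add_q sumG by simp

lemma G_two_le:
  assumes "q \<ge> 2" shows "G m + G (Suc m) \<le> r"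
proof -
  have "(\<Sum>i\<in>{0, 1}. G (m + i)) \<le> (\<Sum>i<q. G (m + i))"
    using assms by (intro sum_mono2) auto
  then show ?thesis using sumG_shift[of m] by simp
qed

lemma dd_two:
  assumes "q \<ge> 2" shows "dd r (B m) (B (Suc (Suc m))) = G m + G (Suc m)"
proof (rule dd_unique)
  show "B m < r" "B (Suc (Suc m)) < r" by (rule B_lt)+
  show "1 \<le> G m + G (Suc m)" using G_pos[of m] by simp
  show "G m + G (Suc m) \<le> r" using G_two_le[OF assms] .
  have "(B m + (G m + G (Suc m))) mod r = ((B m + G m) mod r + G (Suc m)) mod r"
    by (simp add: mod_add_left_eq add.assoc)
  also have "\<dots> = B (Suc (Suc m))" using BG[of m] BG[of "Suc m"] by simp
  finally show "(B m + (G m + G (Suc m))) mod r = B (Suc (Suc m))" .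
qed

lemma length_c: "length (c m) = q - 1" unfolding c_def q_def by simp

lemma c_nth: "k < q - 1 \<Longrightarrow> c m ! k = B (m + k)"
  unfolding c_def B_def q_def by (simp add: nth_butlast nth_rotate)

lemma c_gap:
  assumes "q \<ge> 2" "k < q - 1"
  shows "cyc_next r (c m) k = (if k < q - 2 then G (m + k) else G (m + (q - 2)) + G (m + (q - 1)))"
proof (cases "k < q - 2")
  case True
  then have "Suc k mod (q - 1) = Suc k" by simp
  then show ?thesis using True assms unfolding cyc_next_def G_def
    by (simp add: length_c c_nth)
next
  case False
  then have k: "k = q - 2" using assms by simp
  have "Suc k = q - 1" using k assms by simp
  then have "Suc k mod (q - 1) = 0" by simp
  then have "cyc_next r (c m) k = dd r (B (m + (q - 2))) (B m)"
    unfolding cyc_next_def using assms k by (simp add: length_c c_nth)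
  also have "B m = B (Suc (Suc (m + (q - 2))))"
    using B_add_q[of m] assms by (simp add: Suc_diff_Suc numeral_2_eq_2)
  also have "dd r (B (m + (q - 2))) (B (Suc (Suc (m + (q - 2))))) = G (m + (q - 2)) + G (Suc (m + (q - 2)))"
    by (rule dd_two[OF assms(1)])
  also have "Suc (m + (q - 2)) = m + (q - 1)" using assms by simp
  finally show ?thesis using k by simp
qed

lemma c_cyc:
  assumes "q \<ge> 2" shows "cyclically_ordered r (c m)"
  unfolding cyclically_ordered_def
proof (intro conjI)
  show "c m \<noteq> []" using assms length_c[of m] by auto
  show "distinct (c m)" unfolding c_def using b_dist by (simp add: distinct_butlast)
  have "(\<Sum>k<length (c m). cyc_next r (c m) k) = (\<Sum>k<Suc (q - 2). cyc_next r (c m) k)"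
    using assms by (simp add: length_c Suc_diff_Suc numeral_2_eq_2)
  also have "\<dots> = (\<Sum>k<q - 2. cyc_next r (c m) k) + cyc_next r (c m) (q - 2)" by simp
  also have "(\<Sum>k<q - 2. cyc_next r (c m) k) = (\<Sum>k<q - 2. G (m + k))"
    using assms by (intro sum.cong) (auto simp: c_gap)
  also have "cyc_next r (c m) (q - 2) = G (m + (q - 2)) + G (m + (q - 1))"
    using assms by (simp add: c_gap)
  also have "(\<Sum>k<q - 2. G (m + k)) + (G (m + (q - 2)) + G (m + (q - 1))) = (\<Sum>k<q. G (m + k))"
  proof -
    have "q = Suc (Suc (q - 2))" using assms by simp
    then have "(\<Sum>k<q. G (m + k)) = (\<Sum>k<Suc (Suc (q - 2)). G (m + k))" by simp
    also have "\<dots> = (\<Sum>k<q - 2. G (m + k)) + G (m + (q - 2)) + G (m + Suc (q - 2))" by simp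
    also have "Suc (q - 2) = q - 1" using assms by simp
    finally show ?thesis by simp
  qed
  also have "\<dots> = r" by (rule sumG_shift)
  finally show "(\<Sum>k<length (c m). cyc_next r (c m) k) = r" .
qed

lemma set_c: "set (c m) \<subseteq> {..<r}"
  unfolding c_def using sb in_set_butlastD by fastforce

lemma c_mod: "c (m mod q) = c m"
  unfolding c_def q_def by (metis rotate_conv_mod)

lemma del_rot: "i < q \<Longrightarrow> rotate i (del i b) = c (Suc i)"
proof -
  assume i: "i < q"
  have li: "length (take i b) = i" using i q_def by simp
  have E1: "rotate i (del i b) = drop (Suc i) b @ take i b"
    unfolding del_def using rotate_append[of "take i b" "drop (Suc i) b"] li by simp
  have "c (Suc i) = butlast (drop (Suc i) b @ take (Suc i) b)"
  proof -
    have ls: "length (take (Suc i) b) = Suc i" using i q_def by simp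
    have "rotate (Suc i) b = rotate (length (take (Suc i) b)) (take (Suc i) b @ drop (Suc i) b)"
      using ls by simp
    also have "\<dots> = drop (Suc i) b @ take (Suc i) b" by (rule rotate_append)
    finally show ?thesis unfolding c_def by simp
  qed
  also have "\<dots> = drop (Suc i) b @ take i b"
    using i q_def by (simp add: butlast_append take_Suc_conv_app_nth)
  finally show ?thesis using E1 by simp
qed

lemma Phi_b: "Phi r b k = Phi_cyc r b k"
  using Phi_eq[OF b_dist b_ne sb, of id k] cb by simp

lemma Phi_del:
  assumes "q \<ge> 2" "i < q"
  shows "Phi r (del i b) k = (-1)^(i * q) * Phi_cyc r (c (Suc i)) k"
proof -
  obtain n where n: "rotate n (rotate i (del i b)) = del i b" using rotate_inverse_ex by blast
  have cd: "cyclically_ordered r (del i b)"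
    using cyc_rotate[OF c_cyc[OF assms(1)], of n "Suc i"] del_rot[OF assms(2)] n by simp
  have "length (del i b) = q - 1" using assms by (simp add: length_del q_def)
  then have dne: "del i b \<noteq> []" using assms by auto
  have "Phi r (del i b) k = Phi_cyc r (del i b) k"
    using Phi_eq[OF distinct_del[OF b_dist] dne, of r id k] cd set_del[of i b] sb by auto
  moreover have "Phi_cyc r (c (Suc i)) k = (-1)^(i * (q - 2)) * Phi_cyc r (del i b) k"
  proof -
    have L: "length (del i b) - 1 = q - 2" using assms by (simp add: length_del q_def)
    have "Phi_cyc r (rotate i (del i b)) k = (-1)^(i * (length (del i b) - 1)) * Phi_cyc r (del i b) k"
      by (rule Phi_cyc_rotate[OF dne])
    then show ?thesis unfolding del_rot[OF assms(2)] L .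
  qed
  moreover have "((-1::rat)^(i * (q - 2))) = (-1)^(i * q)"
  proof -
    have "i * q = i * (q - 2) + 2 * i" using assms by (simp add: algebra_simps)
    then show ?thesis by (simp add: power_add power_mult)
  qed
  ultimately show ?thesis by simp
qed

lemma PB_b:
  assumes "q \<ge> 2"
  shows "Phi_of_boundary r b k = (\<Sum>i<q. (-1)^i * (-1)^(i * q) * Phi_cyc r (c (Suc i)) k)"
  unfolding PB_def' q_def[symmetric] using Phi_del[OF assms] by (simp add: mult.assoc)

end


definition PP :: "nat \<Rightarrow> nat \<Rightarrow> nat \<Rightarrow> nat \<Rightarrow> rat" where
  "PP r a n k = (\<Sum>i=1..n. grp_rho r (a + 2 * i) k)"
definition QQ :: "nat \<Rightarrow> nat \<Rightarrow> nat \<Rightarrow> nat \<Rightarrow> rat" where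
  "QQ r a n k = (\<Sum>i=1..n. grp_rho r (a + i) k)"

lemma phi_e_PP: "phi_e r x y k = (if even (dd r x y) then PP r x (dd r x y div 2) k else 0)"
  unfolding phi_e_def PP_def by simp

lemma phi_o_PP: "phi_o r x y k = (if odd (dd r x y) then PP r (Suc x) ((dd r x y - 1) div 2) k else 0)"
  unfolding phi_o_def PP_def by simp

lemma PP_0 [simp]: "PP r a 0 k = 0" unfolding PP_def by simp
lemma PP_Suc: "PP r a (Suc n) k = PP r a n k + grp_rho r (a + 2 * Suc n) k"
  unfolding PP_def by simp
lemma QQ_0 [simp]: "QQ r a 0 k = 0" unfolding QQ_def by simp
lemma QQ_Suc: "QQ r a (Suc n) k = QQ r a n k + grp_rho r (a + Suc n) k"
  unfolding QQ_def by simp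

lemma PP_add: "PP r a (m + n) k = PP r a m k + PP r (a + 2 * m) n k"
  by (induction n) (simp_all add: PP_Suc algebra_simps)

lemma QQ_add: "QQ r a (m + n) k = QQ r a m k + QQ r (a + m) n k"
  by (induction n) (simp_all add: QQ_Suc algebra_simps)

lemma grp_cong: "a mod r = a' mod r \<Longrightarrow> grp_rho r a = grp_rho r a'"
  unfolding grp_rho_def by simp

lemma grp_cong_add: "a mod r = a' mod r \<Longrightarrow> grp_rho r (a + x) = grp_rho r (a' + x)"
  by (rule grp_cong) (metis mod_add_left_eq)

lemma PP_cong: "a mod r = a' mod r \<Longrightarrow> PP r a n k = PP r a' n k"
  unfolding PP_def by (intro sum.cong refl) (simp add: grp_cong_add[of a r a'])

lemma QQ_cong: "a mod r = a' mod r \<Longrightarrow> QQ r a n k = QQ r a' n k"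
  unfolding QQ_def by (intro sum.cong refl) (simp add: grp_cong_add[of a r a'])

lemma PP_QQ: "PP r a (Suc n) k + PP r (Suc a) n k = QQ r (Suc a) (Suc (2 * n)) k"
proof (induction n)
  case 0 then show ?case by (simp add: PP_Suc QQ_Suc)
next
  case (Suc n)
  have "PP r a (Suc (Suc n)) k + PP r (Suc a) (Suc n) k
      = (PP r a (Suc n) k + PP r (Suc a) n k) + grp_rho r (a + 2 * Suc (Suc n)) k
        + grp_rho r (Suc a + 2 * Suc n) k"
    by (simp add: PP_Suc algebra_simps)
  also have "\<dots> = QQ r (Suc a) (Suc (2 * n)) k + grp_rho r (Suc a + Suc (Suc (2 * n))) k
        + grp_rho r (Suc a + Suc (Suc (Suc (2 * n)))) k"
    using Suc by (simp add: algebra_simps)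
  also have "\<dots> = QQ r (Suc a) (Suc (2 * Suc n)) k" by (simp add: QQ_Suc)
  finally show ?case .
qed

lemma QQ_shift: "QQ r (Suc a) r k = QQ r a r k"
proof -
  have "QQ r a (1 + r) k = QQ r a 1 k + QQ r (a + 1) r k" by (rule QQ_add)
  moreover have "QQ r a (Suc r) k = QQ r a r k + grp_rho r (a + Suc r) k" by (rule QQ_Suc)
  moreover have "grp_rho r (a + Suc r) = grp_rho r (Suc a)"
  proof (rule grp_cong)
    have "a + Suc r = Suc a + r" by simp
    then show "(a + Suc r) mod r = Suc a mod r" by (simp only: mod_add_self2)
  qed
  moreover have "QQ r a 1 k = grp_rho r (Suc a) k" by (simp add: QQ_Suc)
  ultimately show ?thesis by simp
qed

lemma QQ_full:
  assumes "k < r" shows "QQ r a r k = 1"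
proof -
  have "QQ r a r k = QQ r 0 r k"
    by (induction a) (simp_all add: QQ_shift)
  also have "QQ r 0 r k = (\<Sum>i\<in>{1..r}. if i = (if k = 0 then r else k) then 1 else 0)"
    unfolding QQ_def grp_rho_def using assms
    by (intro sum.cong refl) (auto simp: mod_if split: if_splits)
  also have "\<dots> = 1" using assms by simp
  finally show ?thesis .
qed

lemma sum_grp: "r > 0 \<Longrightarrow> (\<Sum>k<r. grp_rho r a k) = 1"
  unfolding grp_rho_def by simp

lemma sum_PP: "r > 0 \<Longrightarrow> (\<Sum>k<r. PP r a n k) = of_nat n"
  unfolding PP_def by (subst sum.swap) (simp add: sum_grp)

lemma grp_ge: "0 < r \<Longrightarrow> r \<le> j \<Longrightarrow> grp_rho r a j = 0"
proof -
  assume "0 < r" "r \<le> j"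
  then have "a mod r < j" using mod_less_divisor[of r a] by linarith
  then show ?thesis unfolding grp_rho_def by simp
qed

lemma grp_shift:
  assumes "j < r"
  shows "grp_rho r a ((j + r - 1) mod r) = grp_rho r (Suc a) j"
proof -
  have r: "r > 0" using assms by simp
  have "(j + r - 1) mod r = a mod r \<longleftrightarrow> j = Suc a mod r"
  proof (cases j)
    case 0
    then have "(j + r - 1) mod r = r - 1" using r by simp
    moreover have "a mod r < r" using r by simp
    ultimately show ?thesis using 0 r by (auto simp: mod_Suc)
  next
    case (Suc j')
    then have "(j + r - 1) mod r = j'" using assms by simp
    moreover have "a mod r < r" using r by simp
    ultimately show ?thesis using Suc assms by (auto simp: mod_Suc)
  qed
  then show ?thesis unfolding grp_rho_def by simp
qed

lemma PP_shift: "j < r \<Longrightarrow> PP r a n ((j + r - 1) mod r) = PP r (Suc a) n j"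
  unfolding PP_def using grp_shift by simp

lemma PP_ge: "0 < r \<Longrightarrow> r \<le> j \<Longrightarrow> PP r a n j = 0"
  unfolding PP_def using grp_ge by simp


lemma Phi_ge:
  assumes "0 < r" "r \<le> j"
  shows "Phi r a j = 0"
proof -
  have g: "grp_rho r x j = 0" for x using grp_ge[OF assms] .
  have pe: "phi_e r x y j = 0" for x y unfolding phi_e_def by (simp add: g)
  have po: "phi_o r x y j = 0" for x y unfolding phi_o_def by (simp add: g)
  have PE: "Phi_e r A j = 0" for A unfolding Phi_e_def by (simp add: Let_def scale_def pe)
  have PO: "Phi_o r A j = 0" for A unfolding Phi_o_def by (simp add: po)
  have PC: "Phi_cyc r A j = 0" for A unfolding Phi_cyc_def by (simp add: scale_def PE PO e0_def g)
  show ?thesis unfolding Phi_def by (simp add: Let_def scale_def PC e0_def g)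
qed

lemma mod_off:
  assumes "j0 < (q::nat)"
  shows "(j0 + s) mod q = j0 \<longleftrightarrow> s mod q = 0"
proof -
  have qp: "q > 0" using assms by simp
  define s' where "s' = s mod q"
  have lt: "s' < q" using qp unfolding s'_def by simp
  have e: "(j0 + s) mod q = (j0 + s') mod q" unfolding s'_def by (rule mod_add_right_eq[symmetric])
  have "(j0 + s') mod q = j0 \<longleftrightarrow> s' = 0"
  proof (cases "j0 + s' < q")
    case True then show ?thesis by simp
  next
    case False
    then have "j0 + s' - q < q" using lt assms by simp
    then have "(j0 + s') mod q = j0 + s' - q" using False by (simp add: mod_if)
    then show ?thesis using lt False assms by auto
  qed
  then show ?thesis using e unfolding s'_def by simp
qed

lemma hit:
  assumes "(q::nat) > 0"
  shows "\<exists>k<q. (m + k) mod q = x mod q"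
proof (intro exI conjI)
  let ?k = "(x mod q + q - m mod q) mod q"
  show "?k < q" using assms by simp
  have "m mod q < q" using assms by simp
  have "(m + ?k) mod q = (m + (x mod q + q - m mod q)) mod q"
    by (simp only: mod_add_right_eq)
  also have "\<dots> = (m mod q + (x mod q + q - m mod q)) mod q"
    by (simp only: mod_add_left_eq)
  also have "m mod q + (x mod q + q - m mod q) = x mod q + q" using \<open>m mod q < q\<close> by simp
  finally show "(m + ?k) mod q = x mod q" by simp
qed

context cycb
begin

definition cf :: "nat \<Rightarrow> rat" where
  "cf n = of_nat (fact (varphi r n)) / of_nat (fact (rt r))"

lemma Phi_cyc_even: "even (length A) \<Longrightarrow> A \<noteq> [] \<Longrightarrow> Phi_cyc r A k = cf (length A) * Phi_e r A k"
  unfolding Phi_cyc_def cf_def scale_def by simp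

lemma Phi_cyc_odd: "odd (length A) \<Longrightarrow> Phi_cyc r A k = cf (length A) * Phi_o r A k"
  unfolding Phi_cyc_def cf_def scale_def by auto

lemma c_ne: "q \<ge> 2 \<Longrightarrow> c m \<noteq> []" using length_c[of m] by auto

lemma c_even_entry:
  assumes "q \<ge> 2"
  shows "even_entry r (c m) k \<longleftrightarrow> k < q - 1 \<and>
     even (if k < q - 2 then G (m + k) else G (m + (q - 2)) + G (m + (q - 1)))"
  unfolding even_entry_def using c_gap[OF assms] by (auto simp: length_c)

lemma Phi_o_c_zero:
  assumes "q \<ge> 2" "k0 < q - 1" "even (cyc_next r (c m) k0)"
  shows "Phi_o r (c m) j = 0"
proof -
  have "even_entry r (c m) k0" using assms by (simp add: even_entry_def length_c)
  then show ?thesis unfolding Phi_o_def by auto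
qed

lemma Phi_o_c_odd:
  assumes "q \<ge> 2" "\<And>k. k < q - 2 \<Longrightarrow> odd (G (m + k))" "odd (G (m + (q - 2)) + G (m + (q - 1)))"
  shows "Phi_o r (c m) j = (\<Sum>k<q - 2. phi_o r (B (m + k)) (B (Suc (m + k))) j)
            + phi_o r (B (m + (q - 2))) (B m) j"
proof -
  have ne: "\<forall>k. \<not> even_entry r (c m) k"
    using assms by (auto simp: c_even_entry[OF assms(1)])
  have L: "length (c m) = Suc (q - 2)" using assms(1) by (simp add: length_c)
  have "Phi_o r (c m) j = (\<Sum>k<Suc (q - 2). phi_o r (c m ! k) (c m ! ((k + 1) mod length (c m))) j)"
    unfolding Phi_o_def using ne L by simp
  also have "\<dots> = (\<Sum>k<q - 2. phi_o r (c m ! k) (c m ! ((k + 1) mod length (c m))) j)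
       + phi_o r (c m ! (q - 2)) (c m ! ((q - 2 + 1) mod length (c m))) j" by simp
  also have "(\<Sum>k<q - 2. phi_o r (c m ! k) (c m ! ((k + 1) mod length (c m))) j)
      = (\<Sum>k<q - 2. phi_o r (B (m + k)) (B (Suc (m + k))) j)"
  proof (intro sum.cong refl)
    fix k assume "k \<in> {..<q - 2}"
    then have k: "k < q - 2" by simp
    then have "(k + 1) mod length (c m) = Suc k" using L by simp
    then show "phi_o r (c m ! k) (c m ! ((k + 1) mod length (c m))) j = phi_o r (B (m + k)) (B (Suc (m + k))) j"
      using k by (simp add: c_nth)
  qed
  also have "(q - 2 + 1) mod length (c m) = 0" using L by simp
  also have "c m ! (q - 2) = B (m + (q - 2))" using assms(1) by (simp add: c_nth)
  also have "c m ! 0 = B m" using assms(1) by (simp add: c_nth)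
  finally show ?thesis .
qed

lemma phi_o_G: "odd (G t) \<Longrightarrow> phi_o r (B t) (B (Suc t)) j = PP r (Suc (B t)) ((G t - 1) div 2) j"
  unfolding phi_o_PP G_def by simp

lemma phi_e_G: "even (G t) \<Longrightarrow> phi_e r (B t) (B (Suc t)) j = PP r (B t) (G t div 2) j"
  unfolding phi_e_PP G_def by simp

lemma c_periodic: "c (m + q) = c m"
  using c_mod[of "m + q"] c_mod[of m] by simp

end


lemma sum_two:
  assumes "(q::nat) \<ge> 2"
  shows "(\<Sum>i<q. f i) = f 0 + f 1 + (\<Sum>i<q - 2. f (Suc (Suc i))) "
proof -
  have "q = Suc (Suc (q - 2))" using assms by simp
  then have "(\<Sum>i<q. f i) = (\<Sum>i<Suc (Suc (q - 2)). f i)" by simp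
  also have "\<dots> = f 0 + (\<Sum>i<Suc (q - 2). f (Suc i))" by (rule sum.lessThan_Suc_shift)
  also have "(\<Sum>i<Suc (q - 2). f (Suc i)) = f 1 + (\<Sum>i<q - 2. f (Suc (Suc i)))"
    by (subst sum.lessThan_Suc_shift) simp
  finally show ?thesis by (simp add: add.assoc)
qed

context cycb
begin

lemma q_le: "q \<le> r - 1" using lb unfolding q_def .

lemma cf_even:
  assumes "even q" shows "cf (q - 1) = cf q"
proof -
  have "odd (r - q)" using assms rodd q_le r3 by simp
  then obtain t where t: "r - q = 2 * t + 1" by (metis oddE)
  have "r - (q - 1) - 1 = r - q" using q_pos q_le by simp
  then have "varphi r (q - 1) = varphi r q" unfolding varphi_def using t by simp
  then show ?thesis unfolding cf_def by simp
qed

lemma G_even_mod: "even (G t) \<longleftrightarrow> even (G (t mod q))" by (simp add: G_mod)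

lemma phi_o_split_left:
  assumes "odd g" "even e" "dd r x z = g + e" "(x + g) mod r = y mod r"
  shows "phi_o r x z j = PP r (Suc x) ((g - 1) div 2) j + PP r y (e div 2) j"
proof -
  obtain u where u: "g = 2 * u + 1" using assms(1) oddE by blast
  obtain v where v: "e = 2 * v" using assms(2) by blast
  have "phi_o r x z j = PP r (Suc x) (u + v) j" unfolding phi_o_PP assms(3) u v by simp
  also have "\<dots> = PP r (Suc x) u j + PP r (Suc x + 2 * u) v j" by (rule PP_add)
  also have "PP r (Suc x + 2 * u) v j = PP r y v j"
    by (rule PP_cong) (use assms(4) u in simp)
  finally show ?thesis using u v by simp
qed

lemma phi_o_split_right:
  assumes "even e" "odd h" "dd r y w = e + h" "(y + e) mod r = z mod r"
  shows "phi_o r y w j = PP r (Suc y) (e div 2) j + PP r (Suc z) ((h - 1) div 2) j"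
proof -
  obtain u where u: "h = 2 * u + 1" using assms(2) oddE by blast
  obtain v where v: "e = 2 * v" using assms(1) by blast
  have "phi_o r y w j = PP r (Suc y) (v + u) j" unfolding phi_o_PP assms(3) u v by simp
  also have "\<dots> = PP r (Suc y) v j + PP r (Suc y + 2 * v) u j" by (rule PP_add)
  also have "PP r (Suc y + 2 * v) u j = PP r (Suc z) u j"
  proof (rule PP_cong)
    have "Suc y + 2 * v = Suc (y + e)" using v by simp
    then have "(Suc y + 2 * v) mod r = Suc ((y + e) mod r) mod r" by (simp add: mod_Suc_eq)
    also have "\<dots> = Suc (z mod r) mod r" using assms(4) by simp
    also have "\<dots> = Suc z mod r" by (simp add: mod_Suc_eq)
    finally show "(Suc y + 2 * v) mod r = Suc z mod r" .
  qed
  finally show ?thesis using u v by simp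
qed

lemma even_case:
  assumes qe: "even q"
  shows "Phi_of_boundary r b j = bdW r q (Phi r b) j"
proof -
  have q2: "q \<ge> 2" using qe q_pos by presburger
  have q1: "q \<noteq> 1" "q \<noteq> 0" using q2 by auto
  show ?thesis
  proof (cases "j < r")
    case False
    then have "Phi_of_boundary r b j = 0"
      unfolding PB_def' using Phi_ge[OF r_pos] by simp
    moreover have "bdW r q (Phi r b) j = 0" unfolding bdW_def using q1 qe False by simp
    ultimately show ?thesis by simp
  next
    case jr: True
    define h where "h m = (-1::rat)^m * Phi_cyc r (c m) j" for m
    have hp: "h (x + q) = h x" for x
      unfolding h_def using c_periodic[of x] qe by (simp add: power_add)
    have lenc: "length (c m) = q - 1" for m by (rule length_c)
    have oddc: "odd (length (c m))" for m using qe q2 lenc by simp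
    have hc: "h m = (-1)^m * cf q * Phi_o r (c m) j" for m
      unfolding h_def using Phi_cyc_odd[OF oddc] lenc cf_even[OF qe] by simp
    have "Phi_of_boundary r b j = (\<Sum>i<q. (-1)^i * Phi_cyc r (c (Suc i)) j)"
      unfolding PB_b[OF q2] using qe by (intro sum.cong refl) simp
    also have "\<dots> = - (\<Sum>i<q. h (1 + i))" unfolding h_def by (simp add: sum_negf)
    also have "(\<Sum>i<q. h (1 + i)) = (\<Sum>i<q. h i)" using sum_shift_periodic[of h q 1] hp by simp
    finally have LHS: "Phi_of_boundary r b j = - (\<Sum>i<q. h i)" .
    have RHS: "bdW r q (Phi r b) j = Phi r b ((j + r - 1) mod r) - Phi r b j"
      unfolding bdW_def using q1 qe jr by simp
    have Pb: "Phi r b k = cf q * Phi_e r b k" for k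
      unfolding Phi_b using Phi_cyc_even[of b k] qe b_ne by (simp add: q_def)
    show ?thesis
    proof (cases "\<exists>j0<q. \<forall>t. even (G t) \<longleftrightarrow> t mod q = j0")
      case True
      then obtain j0 where j0q: "j0 < q" and ev: "\<And>t. even (G t) \<longleftrightarrow> t mod q = j0" by blast
      let ?e = "G j0 div 2"
      have S: "{j. even_entry r b j} = {j0}"
      proof -
        have "even_entry r b x \<longleftrightarrow> x = j0" for x
          unfolding even_entry_def using ev[of x] j0q by (auto simp: q_def[symmetric] cyc_next_b)
        then show ?thesis by auto
      qed
      have Pe: "Phi_e r b k = (-1)^(j0+1) * PP r (B j0) ?e k" for k
      proof -
        have "b ! j0 = B j0" unfolding B_def using j0q by simp
        moreover have "b ! ((j0 + 1) mod length b) = B (Suc j0)" unfolding B_def q_def by simp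
        moreover have "even (G j0)" using ev[of j0] j0q by simp
        ultimately show ?thesis unfolding Phi_e_single[OF S] scale_def using phi_e_G by simp
      qed
      have R: "bdW r q (Phi r b) j = cf q * (-1)^(j0+1) * (PP r (Suc (B j0)) ?e j - PP r (B j0) ?e j)"
        unfolding RHS Pb Pe using PP_shift[OF jr] by (simp add: algebra_simps)
      have zero: "h (Suc j0 + Suc (Suc i)) = 0" if i: "i < q - 2" for i
      proof -
        let ?m = "Suc j0 + Suc (Suc i)"
        define k0 where "k0 = q - 3 - i"
        have k0: "k0 < q - 2" unfolding k0_def using i by simp
        have eq: "?m + k0 = j0 + q" unfolding k0_def using i by simp
        have e1: "even (G (j0 + q))" using ev[of "j0 + q"] j0q by simp
        have "even (G (?m + k0))" using e1 eq by metis
        then have "even (cyc_next r (c ?m) k0)" using c_gap[OF q2, of k0 ?m] k0 by simp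
        then show ?thesis unfolding hc using Phi_o_c_zero[OF q2, of k0] k0 by simp
      qed
      define oo where "oo t = phi_o r (B t) (B (Suc t)) j" for t
      have oddG: "odd (G (j0 + s))" if "s mod q \<noteq> 0" for s
        using ev[of "j0 + s"] mod_off[OF j0q, of s] that by simp
      have evG: "even (G (j0 + q))" using ev[of "j0 + q"] j0q by simp
      have P1: "Phi_o r (c (Suc j0)) j = (\<Sum>k<q - 2. oo (Suc j0 + k)) + phi_o r (B (j0 + (q - 1))) (B (Suc j0)) j"
      proof -
        have a: "odd (G (Suc j0 + k))" if "k < q - 2" for k
          using oddG[of "Suc k"] that by simp
        have b1: "odd (G (j0 + (q - 1)))" using oddG[of "q - 1"] q2 by simp
        have i1: "Suc j0 + (q - 2) = j0 + (q - 1)" "Suc j0 + (q - 1) = j0 + q" using q2 by auto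
        have "odd (G (j0 + (q - 1)) + G (j0 + q))" using b1 evG by simp
        then have b: "odd (G (Suc j0 + (q - 2)) + G (Suc j0 + (q - 1)))" by (simp only: i1 not_False_eq_True)
        have X: "Phi_o r (c (Suc j0)) j = (\<Sum>k<q - 2. phi_o r (B (Suc j0 + k)) (B (Suc (Suc j0 + k))) j)
            + phi_o r (B (Suc j0 + (q - 2))) (B (Suc j0)) j" by (rule Phi_o_c_odd[OF q2 a b])
        from X show ?thesis unfolding oo_def i1(1) .
      qed
      have P2: "Phi_o r (c (Suc (Suc j0))) j = (\<Sum>k<q - 2. oo (Suc j0 + Suc k)) + phi_o r (B (j0 + q)) (B (Suc (Suc j0))) j"
      proof -
        have a: "odd (G (Suc (Suc j0) + k))" if "k < q - 2" for k
          using oddG[of "Suc (Suc k)"] that by simp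
        have b1: "odd (G (j0 + Suc q))" using oddG[of "Suc q"] q2 by (simp add: mod_Suc)
        have i1: "Suc (Suc j0) + (q - 2) = j0 + q" "Suc (Suc j0) + (q - 1) = j0 + Suc q" using q2 by auto
        have "odd (G (j0 + q) + G (j0 + Suc q))" using b1 evG by simp
        then have b: "odd (G (Suc (Suc j0) + (q - 2)) + G (Suc (Suc j0) + (q - 1)))" by (simp only: i1 not_False_eq_True)
        have X: "Phi_o r (c (Suc (Suc j0))) j = (\<Sum>k<q - 2. phi_o r (B (Suc (Suc j0) + k)) (B (Suc (Suc (Suc j0) + k))) j)
            + phi_o r (B (Suc (Suc j0) + (q - 2))) (B (Suc (Suc j0))) j" by (rule Phi_o_c_odd[OF q2 a b])
        have Y: "(\<Sum>k<q - 2. phi_o r (B (Suc (Suc j0) + k)) (B (Suc (Suc (Suc j0) + k))) j)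
            = (\<Sum>k<q - 2. oo (Suc j0 + Suc k))" unfolding oo_def by simp
        from X show ?thesis unfolding Y i1(1) .
      qed
      have tele: "(\<Sum>k<q - 2. oo (Suc j0 + k)) - (\<Sum>k<q - 2. oo (Suc j0 + Suc k)) = oo (Suc j0) - oo (j0 + (q - 1))"
      proof -
        have "(\<Sum>k<q - 2. oo (Suc j0 + k)) - (\<Sum>k<q - 2. oo (Suc j0 + Suc k))
            = (\<Sum>k<q - 2. oo (Suc j0 + k) - oo (Suc j0 + Suc k))" by (simp add: sum_subtractf)
        also have "\<dots> = oo (Suc j0 + 0) - oo (Suc j0 + (q - 2))"
          by (rule sum_lessThan_telescope'[of "\<lambda>k. oo (Suc j0 + k)"])
        also have "Suc j0 + (q - 2) = j0 + (q - 1)" using q2 by simp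
        finally show ?thesis by simp
      qed
      let ?a1 = "j0 + (q - 1)"
      have Sa1: "Suc ?a1 = j0 + q" using q2 by simp
      have ga: "odd (G ?a1)" using oddG[of "q - 1"] q2 by simp
      have ge: "G (j0 + q) = G j0" using G_add_q by simp
      have ej0: "even (G j0)" using ev[of j0] j0q by simp
      have hh: "odd (G (Suc j0))" using oddG[of 1] q2 by simp
      have X1: "phi_o r (B ?a1) (B (Suc j0)) j = oo ?a1 + PP r (B j0) ?e j"
      proof -
        have Bs: "B (Suc j0) = B (Suc (Suc ?a1))" using Sa1 B_add_q[of "Suc j0"] by simp
        have d: "dd r (B ?a1) (B (Suc j0)) = G ?a1 + G j0"
          unfolding Bs dd_two[OF q2] using Sa1 ge by simp
        have m: "(B ?a1 + G ?a1) mod r = B j0 mod r"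
          using BG[of ?a1] Sa1 B_add_q[of j0] B_lt[of j0] by simp
        have "phi_o r (B ?a1) (B (Suc j0)) j = PP r (Suc (B ?a1)) ((G ?a1 - 1) div 2) j + PP r (B j0) ?e j"
          by (rule phi_o_split_left[OF ga ej0 d m])
        then show ?thesis unfolding oo_def using phi_o_G[OF ga] by simp
      qed
      have X2: "phi_o r (B (j0 + q)) (B (Suc (Suc j0))) j = PP r (Suc (B j0)) ?e j + oo (Suc j0)"
      proof -
        have Bq: "B (j0 + q) = B j0" by (rule B_add_q)
        have d: "dd r (B j0) (B (Suc (Suc j0))) = G j0 + G (Suc j0)" by (rule dd_two[OF q2])
        have m: "(B j0 + G j0) mod r = B (Suc j0) mod r" using BG[of j0] B_lt[of "Suc j0"] by simp
        have "phi_o r (B j0) (B (Suc (Suc j0))) j = PP r (Suc (B j0)) ?e j + PP r (Suc (B (Suc j0))) ((G (Suc j0) - 1) div 2) j"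
          by (rule phi_o_split_right[OF ej0 hh d m])
        then show ?thesis unfolding oo_def Bq using phi_o_G[OF hh] by simp
      qed
      have D: "Phi_o r (c (Suc j0)) j - Phi_o r (c (Suc (Suc j0))) j = PP r (B j0) ?e j - PP r (Suc (B j0)) ?e j"
        unfolding P1 P2 X1 X2 using tele by (simp add: algebra_simps)
      have "(\<Sum>i<q. h i) = (\<Sum>i<q. h (Suc j0 + i))" using sum_shift_periodic[of h q "Suc j0"] hp by simp
      also have "\<dots> = h (Suc j0 + 0) + h (Suc j0 + 1) + (\<Sum>i<q - 2. h (Suc j0 + Suc (Suc i)))"
        by (rule sum_two[OF q2])
      also have "(\<Sum>i<q - 2. h (Suc j0 + Suc (Suc i))) = 0" using zero by simp
      also have "h (Suc j0 + 0) + h (Suc j0 + 1) = (-1)^(Suc j0) * cf q * (Phi_o r (c (Suc j0)) j - Phi_o r (c (Suc (Suc j0))) j)"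
        unfolding hc by (simp add: algebra_simps)
      finally have "(\<Sum>i<q. h i) = (-1)^(Suc j0) * cf q * (PP r (B j0) ?e j - PP r (Suc (B j0)) ?e j)"
        unfolding D by simp
      then show ?thesis unfolding LHS R by (simp add: algebra_simps)
    next
      case False
      have Pe0: "Phi_e r b k = 0" for k
      proof -
        have "card {j. even_entry r b j} \<noteq> 1"
        proof
          assume "card {j. even_entry r b j} = 1"
          then obtain j0 where S: "{j. even_entry r b j} = {j0}" using card_1_singletonE by blast
          then have j0q: "j0 < q" by (auto simp: even_entry_def q_def)
          have "even (G t) \<longleftrightarrow> t mod q = j0" for t
          proof -
            have "even (G t) \<longleftrightarrow> even_entry r b (t mod q)"
              unfolding even_entry_def using q_pos by (simp add: q_def[symmetric] cyc_next_b G_mod)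
            also have "\<dots> \<longleftrightarrow> t mod q = j0" using S by auto
            finally show ?thesis .
          qed
          then show False using False j0q by blast
        qed
        then show ?thesis using Phi_e_zero by simp
      qed
      have R0: "bdW r q (Phi r b) j = 0" unfolding RHS Pb Pe0 by simp
      have hz: "h m = 0" for m
      proof -
        have "\<exists>k0<q - 1. even (cyc_next r (c m) k0)"
        proof (cases "even (G (m + (q - 2)) + G (m + (q - 1)))")
          case True
          then show ?thesis using c_gap[OF q2, of "q - 2" m] q2 by (intro exI[of _ "q - 2"]) simp
        next
          case F2: False
          have "\<exists>x y. {x, y} = {m + (q - 2), m + (q - 1)} \<and> even (G x) \<and> odd (G y)"
          proof (cases "even (G (m + (q - 2)))")
            case True
            then have "odd (G (m + (q - 1)))" using F2 by simp
            then show ?thesis using True by blast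
          next
            case False
            then have "even (G (m + (q - 1)))" using F2 by simp
            then show ?thesis using False by blast
          qed
          then obtain x y where xy: "{x, y} = {m + (q - 2), m + (q - 1)}" "even (G x)" "odd (G y)"
            by blast
          have "x mod q < q" using q_pos by simp
          then have "\<not> (\<forall>t. even (G t) \<longleftrightarrow> t mod q = x mod q)" using False by blast
          then obtain t where t: "\<not> (even (G t) \<longleftrightarrow> t mod q = x mod q)" by blast
          have tx: "t mod q \<noteq> x mod q"
          proof
            assume eq: "t mod q = x mod q"
            have "G t = G x" using G_mod[of t] G_mod[of x] eq by simp
            then show False using t eq xy(2) by simp
          qed
          then have et: "even (G t)" using t by simp
          have ty: "t mod q \<noteq> y mod q"
          proof
            assume eq: "t mod q = y mod q"
            have "G t = G y" using G_mod[of t] G_mod[of y] eq by simp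
            then show False using et xy(3) by simp
          qed
          obtain k where k: "k < q" "(m + k) mod q = t mod q" using hit[OF q_pos] by blast
          have m2: "m + (q - 2) = x \<or> m + (q - 2) = y" using xy(1) by (metis insertCI insertE singletonD)
          have m1: "m + (q - 1) = x \<or> m + (q - 1) = y" using xy(1) by (metis insertCI insertE singletonD)
          have "k \<noteq> q - 2" using m2 k(2) tx ty by auto
          moreover have "k \<noteq> q - 1" using m1 k(2) tx ty by auto
          ultimately have k2: "k < q - 2" using k(1) by simp
          have "G (m + k) = G t" using G_mod[of "m + k"] G_mod[of t] k(2) by simp
          then have "even (G (m + k))" using et by simp
          then show ?thesis using c_gap[OF q2, of k m] k2 by (intro exI[of _ k]) simp
        qed
        then obtain k0 where "k0 < q - 1" "even (cyc_next r (c m) k0)" by blast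
        then show ?thesis unfolding hc using Phi_o_c_zero[OF q2] by simp
      qed
      show ?thesis unfolding LHS R0 using hz by simp
    qed
  qed
qed

end


lemma mod_add_cancel_iff: "((u::nat) + s) mod q = (u + s') mod q \<longleftrightarrow> s mod q = s' mod q"
  using cong_add_lcancel_nat[of u s s' q] unfolding cong_def .

lemma mod_inj_add:
  assumes "(k1::nat) < q" "k2 < q" "(m + k1) mod q = (m + k2) mod q"
  shows "k1 = k2"
  using assms mod_add_cancel_iff[of m k1 q k2] by simp

lemma mod_lt2: "(s::nat) < 2 * q \<Longrightarrow> s mod q = (if s < q then s else s - q)"
  by (simp add: mod_if)

lemma pair_to_ud:
  assumes "(x::nat) < q" "y < q" "x \<noteq> y" "q \<ge> 3"
  shows "\<exists>u<q. \<exists>d. 1 \<le> d \<and> d \<le> q - 2 \<and> (\<forall>z. (z = x \<or> z = y) \<longleftrightarrow> (z = u \<or> z = (u + d) mod q))"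
proof -
  have main: "\<exists>u<q. \<exists>d. 1 \<le> d \<and> d \<le> q - 2 \<and> (\<forall>z. (z = x' \<or> z = y') \<longleftrightarrow> (z = u \<or> z = (u + d) mod q))"
    if "x' < y'" "y' < q" for x' y'
  proof (cases "y' - x' \<le> q - 2")
    case True
    have "(x' + (y' - x')) mod q = y'" using that by simp
    then show ?thesis using True that by (intro exI[of _ x'] conjI exI[of _ "y' - x'"]) auto
  next
    case False
    then have "y' - x' = q - 1" using that by simp
    then have xy: "x' = 0" "y' = q - 1" using that by auto
    have "(q - 1 + 1) mod q = 0" using that by simp
    then show ?thesis using xy assms(4) that
      by (intro exI[of _ "q - 1"] conjI exI[of _ 1]) auto
  qed
  show ?thesis
  proof (cases "x < y")
    case True then show ?thesis using main[OF True assms(2)] by blast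
  next
    case False
    then have "y < x" using assms(3) by simp
    from main[OF this assms(1)] show ?thesis by blast
  qed
qed

context cycb
begin

definition gapc :: "nat \<Rightarrow> nat \<Rightarrow> nat" where
  "gapc m k = (if k < q - 2 then G (m + k) else G (m + (q - 2)) + G (m + (q - 1)))"

lemma ee_c: "q \<ge> 2 \<Longrightarrow> even_entry r (c m) k \<longleftrightarrow> k < q - 1 \<and> even (gapc m k)"
  unfolding gapc_def by (rule c_even_entry)

lemma Phi_e_c_single:
  assumes q2: "q \<ge> 2" and k0: "k0 < q - 1" and H: "\<And>k. k < q - 1 \<Longrightarrow> even (gapc m k) \<longleftrightarrow> k = k0"
  shows "Phi_e r (c m) j = (-1)^(k0+1) * phi_e r (B (m + k0)) (if k0 < q - 2 then B (Suc (m + k0)) else B m) j"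
proof -
  have S: "{k. even_entry r (c m) k} = {k0}"
    using H k0 by (auto simp: ee_c[OF q2])
  have L: "length (c m) = q - 1" by (rule length_c)
  have n1: "c m ! k0 = B (m + k0)" using k0 by (simp add: c_nth)
  have n2: "c m ! ((k0 + 1) mod length (c m)) = (if k0 < q - 2 then B (Suc (m + k0)) else B m)"
  proof (cases "k0 < q - 2")
    case True
    then have "(k0 + 1) mod length (c m) = Suc k0" using L by simp
    then show ?thesis using True by (simp add: c_nth)
  next
    case False
    then have "k0 + 1 = length (c m)" using L k0 by simp
    then have "(k0 + 1) mod length (c m) = 0" by simp
    then show ?thesis using False q2 by (simp add: c_nth)
  qed
  show ?thesis unfolding Phi_e_single[OF S] scale_def n1 n2 by simp
qed

lemma Phi_e_c_two:
  assumes q2: "q \<ge> 2" and "k1 < q - 1" "k2 < q - 1" "k1 \<noteq> k2" "even (gapc m k1)" "even (gapc m k2)"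
  shows "Phi_e r (c m) j = 0"
proof -
  have "card {k. even_entry r (c m) k} \<noteq> 1"
  proof
    assume "card {k. even_entry r (c m) k} = 1"
    then obtain k0 where S: "{k. even_entry r (c m) k} = {k0}" using card_1_singletonE by blast
    have "k1 \<in> {k. even_entry r (c m) k}" "k2 \<in> {k. even_entry r (c m) k}"
      using assms by (auto simp: ee_c[OF q2])
    then show False using S assms(4) by auto
  qed
  then show ?thesis using Phi_e_zero by simp
qed

lemma Phi_e_c_card:
  assumes "Phi_e r (c m) j \<noteq> 0"
  shows "\<exists>k0. {k. even_entry r (c m) k} = {k0}"
proof -
  have "card {k. even_entry r (c m) k} = 1" using assms Phi_e_zero by fastforce
  then show ?thesis using card_1_singletonE by blast
qed

lemma Phi_o_b_odd:
  assumes "\<And>t. odd (G t)"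
  shows "Phi_o r b k = (\<Sum>t<q. phi_o r (B t) (B (Suc t)) k)"
proof -
  have "\<forall>t. \<not> even_entry r b t" using assms by (auto simp: even_entry_def q_def[symmetric] cyc_next_b)
  moreover have "b ! t = B t" "b ! ((t + 1) mod length b) = B (Suc t)" if "t < q" for t
    using that unfolding B_def q_def by auto
  ultimately show ?thesis unfolding Phi_o_def by (simp add: q_def[symmetric])
qed

lemma Phi_o_b_zero:
  assumes "t < q" "even (G t)"
  shows "Phi_o r b k = 0"
proof -
  have "even_entry r b t" using assms by (simp add: even_entry_def q_def[symmetric] cyc_next_b)
  then show ?thesis unfolding Phi_o_def by auto
qed

lemma B_sum: "(B 0 + (\<Sum>m<n. G m)) mod r = B n"
proof (induction n)
  case 0 then show ?case using B_lt[of 0] by simp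
next
  case (Suc n)
  have "(B 0 + (\<Sum>m<Suc n. G m)) mod r = ((B 0 + (\<Sum>m<n. G m)) + G n) mod r" by (simp add: add.assoc)
  also have "\<dots> = ((B 0 + (\<Sum>m<n. G m)) mod r + G n) mod r" by (simp add: mod_add_left_eq)
  also have "\<dots> = B (Suc n)" using Suc BG[of n] by simp
  finally show ?case .
qed

lemma QQ_tele: "(\<Sum>m<n. QQ r (Suc (B m)) (G m) j) = QQ r (Suc (B 0)) (\<Sum>m<n. G m) j"
proof (induction n)
  case 0 then show ?case by simp
next
  case (Suc n)
  have "QQ r (Suc (B 0)) (\<Sum>m<Suc n. G m) j = QQ r (Suc (B 0)) ((\<Sum>m<n. G m) + G n) j" by simp
  also have "\<dots> = QQ r (Suc (B 0)) (\<Sum>m<n. G m) j + QQ r (Suc (B 0) + (\<Sum>m<n. G m)) (G n) j"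
    by (rule QQ_add)
  also have "QQ r (Suc (B 0) + (\<Sum>m<n. G m)) (G n) j = QQ r (Suc (B n)) (G n) j"
  proof (rule QQ_cong)
    have "(Suc (B 0) + (\<Sum>m<n. G m)) mod r = Suc ((B 0 + (\<Sum>m<n. G m)) mod r) mod r"
      by (simp add: mod_Suc_eq)
    also have "\<dots> = Suc (B n) mod r" using B_sum[of n] by simp
    finally show "(Suc (B 0) + (\<Sum>m<n. G m)) mod r = Suc (B n) mod r" .
  qed
  finally show ?case using Suc by simp
qed

lemma all_odd_from:
  assumes "\<And>k. k < q \<Longrightarrow> odd (G (m + k))"
  shows "odd (G t)"
proof -
  obtain k where k: "k < q" "(m + k) mod q = t mod q" using hit[OF q_pos] by blast
  have "G t = G (m + k)" using G_mod[of t] G_mod[of "m + k"] k(2) by simp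
  then show ?thesis using assms k(1) by simp
qed

lemma two_to_a:
  assumes q3: "q \<ge> 3" and k: "k1 < q" "k2 < q" "k1 \<noteq> k2"
    and H: "\<And>k. k < q \<Longrightarrow> even (G (m + k)) \<longleftrightarrow> (k = k1 \<or> k = k2)"
  shows "\<exists>u<q. \<exists>d. 1 \<le> d \<and> d \<le> q - 2 \<and> (\<forall>t. even (G t) \<longleftrightarrow> (t mod q = u \<or> t mod q = (u + d) mod q))"
proof -
  let ?x = "(m + k1) mod q" and ?y = "(m + k2) mod q"
  have xy: "?x < q" "?y < q" "?x \<noteq> ?y" using q_pos k mod_inj_add[of k1 q k2 m] by auto
  obtain u d where ud: "u < q" "1 \<le> d" "d \<le> q - 2" "\<forall>z. (z = ?x \<or> z = ?y) \<longleftrightarrow> (z = u \<or> z = (u + d) mod q)"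
    using pair_to_ud[OF xy q3] by blast
  have "even (G t) \<longleftrightarrow> (t mod q = u \<or> t mod q = (u + d) mod q)" for t
  proof -
    obtain kk where kk: "kk < q" "(m + kk) mod q = t mod q" using hit[OF q_pos] by blast
    have "G t = G (m + kk)" using G_mod[of t] G_mod[of "m + kk"] kk(2) by simp
    then have "even (G t) \<longleftrightarrow> (kk = k1 \<or> kk = k2)" using H kk(1) by simp
    also have "\<dots> \<longleftrightarrow> (t mod q = ?x \<or> t mod q = ?y)"
      using mod_inj_add[OF kk(1) k(1), of m] mod_inj_add[OF kk(1) k(2), of m] kk(2) by auto
    also have "\<dots> \<longleftrightarrow> (t mod q = u \<or> t mod q = (u + d) mod q)" using ud(4) by blast
    finally show ?thesis .
  qed
  then show ?thesis using ud by blast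
qed

end


context cycb
begin

lemma phi_e_add:
  assumes q2: "q \<ge> 2" and e1: "even (G u)" and e2: "even (G (Suc u))"
  shows "phi_e r (B u) (B (Suc (Suc u))) j = phi_e r (B u) (B (Suc u)) j + phi_e r (B (Suc u)) (B (Suc (Suc u))) j"
proof -
  have d: "dd r (B u) (B (Suc (Suc u))) = G u + G (Suc u)" by (rule dd_two[OF q2])
  obtain a where a: "G u = 2 * a" using e1 by blast
  obtain b' where b': "G (Suc u) = 2 * b'" using e2 by blast
  have "phi_e r (B u) (B (Suc (Suc u))) j = PP r (B u) (a + b') j"
    unfolding phi_e_PP d a b' by simp
  also have "\<dots> = PP r (B u) a j + PP r (B u + 2 * a) b' j" by (rule PP_add)
  also have "PP r (B u + 2 * a) b' j = PP r (B (Suc u)) b' j"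
    by (rule PP_cong) (use BG[of u] a B_lt[of "Suc u"] in simp)
  finally show ?thesis using phi_e_G[OF e1] phi_e_G[OF e2] a b' by simp
qed

lemma neg_pow_cancel: "n \<ge> 1 \<Longrightarrow> (-1::rat)^n + (-1)^(n - 1) = 0"
  by (cases n) auto

lemma caseA:
  assumes q3: "q \<ge> 3" and qo: "odd q" and u: "u < q" and d: "1 \<le> d" "d \<le> q - 2"
    and ch: "\<And>t. even (G t) \<longleftrightarrow> (t mod q = u \<or> t mod q = (u + d) mod q)"
  shows "(\<Sum>m<q. Phi_e r (c m) j) = 0"
proof -
  have q2: "q \<ge> 2" using q3 by simp
  define Pr where "Pr s \<longleftrightarrow> s = 0 \<or> s = q \<or> s = d \<or> s = q + d" for s
  have Prel: "even (G (u + s)) \<longleftrightarrow> Pr s" if s: "s < 2 * q" for s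
  proof -
    have "(u + s) mod q = u \<longleftrightarrow> s mod q = 0" by (rule mod_off[OF u])
    also have "\<dots> \<longleftrightarrow> s = 0 \<or> s = q" using s by (auto simp: mod_lt2)
    finally have A: "(u + s) mod q = u \<longleftrightarrow> s = 0 \<or> s = q" .
    have "(u + s) mod q = (u + d) mod q \<longleftrightarrow> s mod q = d mod q" by (rule mod_add_cancel_iff)
    also have "\<dots> \<longleftrightarrow> s = d \<or> s = q + d" using s d by (auto simp: mod_lt2)
    finally have B: "(u + s) mod q = (u + d) mod q \<longleftrightarrow> s = d \<or> s = q + d" .
    show ?thesis using ch[of "u + s"] A B unfolding Pr_def by blast
  qed
  have gap_rel: "even (gapc (Suc u + t) k) \<longleftrightarrow>
      (if k < q - 2 then Pr (Suc t + k) else (Pr (t + (q - 1)) \<longleftrightarrow> Pr (t + q)))"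
    if t: "t < q" and k: "k < q - 1" for t k
  proof (cases "k < q - 2")
    case True
    have "Suc u + t + k = u + (Suc t + k)" by simp
    then have "gapc (Suc u + t) k = G (u + (Suc t + k))" unfolding gapc_def using True by (simp add: add.assoc)
    then show ?thesis using Prel[of "Suc t + k"] t k True by simp
  next
    case False
    have i1: "Suc u + t + (q - 2) = u + (t + (q - 1))" using q2 by simp
    have i2: "Suc u + t + (q - 1) = u + (t + q)" using q2 by simp
    have "gapc (Suc u + t) k = G (u + (t + (q - 1))) + G (u + (t + q))"
      unfolding gapc_def using False by (simp only: i1 i2 if_False)
    then show ?thesis using Prel[of "t + (q - 1)"] Prel[of "t + q"] t False by simp
  qed
  define f where "f t = Phi_e r (c (Suc u + t)) j" for t
  have fper: "(\<lambda>m. Phi_e r (c m) j) (x + q) = (\<lambda>m. Phi_e r (c m) j) x" for x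
    using c_periodic[of x] by simp
  have "(\<Sum>m<q. Phi_e r (c m) j) = (\<Sum>t<q. f t)"
    unfolding f_def using sum_shift_periodic[of "\<lambda>m. Phi_e r (c m) j" q "Suc u", OF fper] by simp
  also have "\<dots> = (\<Sum>t\<in>{0, 1, d, d + 1}. f t)"
  proof (rule sum.mono_neutral_right)
    show "finite {..<q}" by simp
    show "{0, 1, d, d + 1} \<subseteq> {..<q}" using d q3 by auto
    show "\<forall>t\<in>{..<q} - {0, 1, d, d + 1}. f t = 0"
    proof
      fix t assume "t \<in> {..<q} - {0, 1, d, d + 1}"
      then have t: "t < q" "t \<noteq> 0" "t \<noteq> 1" "t \<noteq> d" "t \<noteq> d + 1" by auto
      have k1: "q - 2 < q - 1" using q3 by simp
      have k2: "q - 1 - t < q - 1" "q - 1 - t < q - 2" using t q3 by auto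
      have e1: "even (gapc (Suc u + t) (q - 2))"
        using gap_rel[OF t(1) k1] t d q3 unfolding Pr_def by auto
      have e2: "even (gapc (Suc u + t) (q - 1 - t))"
        using gap_rel[OF t(1) k2(1)] k2(2) t d q3 unfolding Pr_def by auto
      have "q - 2 \<noteq> q - 1 - t" using t q3 by auto
      then show "f t = 0" unfolding f_def using Phi_e_c_two[OF q2 k1 k2(1) _ e1 e2] by simp
    qed
  qed
  also have "\<dots> = 0"
  proof (cases "d = 1")
    case True
    have S: "{0, 1, d, d + 1} = {0, 1, (2::nat)}" using True by auto
    have f0: "f 0 = - phi_e r (B (Suc u)) (B (Suc (Suc u))) j"
    proof -
      have H: "even (gapc (Suc u + 0) k) \<longleftrightarrow> k = 0" if "k < q - 1" for k
        using gap_rel[of 0 k] that True q3 unfolding Pr_def by auto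
      show ?thesis unfolding f_def using Phi_e_c_single[OF q2 _ H, of j] q3 by simp
    qed
    have f1: "f 1 = phi_e r (B u) (B (Suc (Suc u))) j"
    proof -
      have H: "even (gapc (Suc u + 1) k) \<longleftrightarrow> k = q - 2" if "k < q - 1" for k
        using gap_rel[of 1 k] that True q3 unfolding Pr_def by auto
      have e: "Phi_e r (c (Suc u + 1)) j = (-1)^(q - 2 + 1) * phi_e r (B (Suc u + 1 + (q - 2))) (B (Suc u + 1)) j"
        using Phi_e_c_single[OF q2 _ H, of j] q3 by simp
      have i: "Suc u + 1 + (q - 2) = u + q" using q3 by simp
      have "B (Suc u + 1 + (q - 2)) = B u" unfolding i by (rule B_add_q)
      moreover have "(-1::rat)^(q - 2 + 1) = 1" using q3 qo by simp
      ultimately show ?thesis unfolding f_def using e by simp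
    qed
    have f2: "f 2 = - phi_e r (B u) (B (Suc u)) j"
    proof -
      have H: "even (gapc (Suc u + 2) k) \<longleftrightarrow> k = q - 3" if "k < q - 1" for k
        using gap_rel[of 2 k] that True q3 unfolding Pr_def by auto
      have k0: "q - 3 < q - 1" "q - 3 < q - 2" using q3 by auto
      have e: "Phi_e r (c (Suc u + 2)) j = (-1)^(q - 3 + 1) * phi_e r (B (Suc u + 2 + (q - 3))) (B (Suc (Suc u + 2 + (q - 3)))) j"
        using Phi_e_c_single[OF q2 k0(1) H, of j] k0(2) by simp
      have i: "Suc u + 2 + (q - 3) = u + q" using q3 by simp
      have "B (Suc u + 2 + (q - 3)) = B u" unfolding i by (rule B_add_q)
      moreover have "B (Suc (Suc u + 2 + (q - 3))) = B (Suc u)" unfolding i using B_add_q[of "Suc u"] by simp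
      moreover have "(-1::rat)^(q - 3 + 1) = -1"
      proof -
        have "odd (q - 3 + 1)" using q3 qo by presburger
        then show ?thesis by (rule neg_one_odd_power)
      qed
      ultimately show ?thesis unfolding f_def using e by simp
    qed
    have eu: "even (G u)" using ch[of u] u by simp
    have eu1: "even (G (Suc u))" using ch[of "Suc u"] u True by (simp add: mod_Suc_eq)
    have "(\<Sum>t\<in>{0, 1, d, d + 1}. f t) = f 0 + f 1 + f 2" unfolding S by simp
    also have "\<dots> = 0" unfolding f0 f1 f2 using phi_e_add[OF q2 eu eu1, of j] by simp
    finally show ?thesis .
  next
    case False
    then have d2: "d \<ge> 2" using d by simp
    define X where "X = phi_e r (B (u + d)) (B (Suc (u + d))) j"
    define Y where "Y = phi_e r (B u) (B (Suc u)) j"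
    have f0: "f 0 = (-1)^(d - 1 + 1) * X"
    proof -
      have H: "even (gapc (Suc u + 0) k) \<longleftrightarrow> k = d - 1" if "k < q - 1" for k
        using gap_rel[of 0 k] that d2 d q3 unfolding Pr_def by auto
      have k0: "d - 1 < q - 1" "d - 1 < q - 2" using d d2 q3 by auto
      have i: "Suc u + 0 + (d - 1) = u + d" using d by simp
      have e: "Phi_e r (c (Suc u + 0)) j = (-1)^(d - 1 + 1) * phi_e r (B (Suc u + 0 + (d - 1))) (B (Suc (Suc u + 0 + (d - 1)))) j"
        using Phi_e_c_single[OF q2 k0(1) H, of j] k0(2) by simp
      show ?thesis using e unfolding i f_def X_def by simp
    qed
    have f1: "f 1 = (-1)^(d - 2 + 1) * X"
    proof -
      have H: "even (gapc (Suc u + 1) k) \<longleftrightarrow> k = d - 2" if "k < q - 1" for k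
        using gap_rel[of 1 k] that d2 d q3 unfolding Pr_def by auto
      have k0: "d - 2 < q - 1" "d - 2 < q - 2" using d d2 q3 by auto
      have i: "Suc u + 1 + (d - 2) = u + d" using d2 by simp
      have e: "Phi_e r (c (Suc u + 1)) j = (-1)^(d - 2 + 1) * phi_e r (B (Suc u + 1 + (d - 2))) (B (Suc (Suc u + 1 + (d - 2)))) j"
        using Phi_e_c_single[OF q2 k0(1) H, of j] k0(2) by simp
      show ?thesis using e unfolding i f_def X_def by simp
    qed
    have fd: "f d = (-1)^(q - 1 - d + 1) * Y"
    proof -
      have H: "even (gapc (Suc u + d) k) \<longleftrightarrow> k = q - 1 - d" if "k < q - 1" for k
        using gap_rel[of d k] that d2 d q3 unfolding Pr_def by auto
      have k0: "q - 1 - d < q - 1" "q - 1 - d < q - 2" using d d2 q3 by auto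
      have i: "Suc u + d + (q - 1 - d) = u + q" using d q3 by simp
      have "B (Suc u + d + (q - 1 - d)) = B u" unfolding i by (rule B_add_q)
      moreover have "B (Suc (Suc u + d + (q - 1 - d))) = B (Suc u)" unfolding i using B_add_q[of "Suc u"] by simp
      moreover have e: "Phi_e r (c (Suc u + d)) j = (-1)^(q - 1 - d + 1) * phi_e r (B (Suc u + d + (q - 1 - d))) (B (Suc (Suc u + d + (q - 1 - d)))) j"
        using Phi_e_c_single[OF q2 k0(1) H, of j] k0(2) by simp
      ultimately show ?thesis unfolding f_def Y_def by simp
    qed
    have fd1: "f (d + 1) = (-1)^(q - 2 - d + 1) * Y"
    proof -
      have t: "d + 1 < q" using d q3 by simp
      have H: "even (gapc (Suc u + (d + 1)) k) \<longleftrightarrow> k = q - 2 - d" if "k < q - 1" for k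
        using gap_rel[OF t that] d2 d q3 unfolding Pr_def by auto
      have k0: "q - 2 - d < q - 1" "q - 2 - d < q - 2" using d d2 q3 by auto
      have i: "Suc u + (d + 1) + (q - 2 - d) = u + q" using d q3 by simp
      have "B (Suc u + (d + 1) + (q - 2 - d)) = B u" unfolding i by (rule B_add_q)
      moreover have "B (Suc (Suc u + (d + 1) + (q - 2 - d))) = B (Suc u)" unfolding i using B_add_q[of "Suc u"] by simp
      moreover have e: "Phi_e r (c (Suc u + (d + 1))) j = (-1)^(q - 2 - d + 1) * phi_e r (B (Suc u + (d + 1) + (q - 2 - d))) (B (Suc (Suc u + (d + 1) + (q - 2 - d)))) j"
        using Phi_e_c_single[OF q2 k0(1) H, of j] k0(2) by simp
      ultimately show ?thesis unfolding f_def Y_def by simp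
    qed
    have "(\<Sum>t\<in>{0, 1, d, d + 1}. f t) = f 0 + (f 1 + (f d + f (d + 1)))" using d2 by simp
    also have "\<dots> = ((-1)^(d - 1 + 1) + (-1)^(d - 2 + 1)) * X + ((-1)^(q - 1 - d + 1) + (-1)^(q - 2 - d + 1)) * Y"
      unfolding f0 f1 fd fd1 by (simp add: algebra_simps)
    also have "(-1::rat)^(d - 1 + 1) + (-1)^(d - 2 + 1) = 0"
      using neg_pow_cancel[of "d - 1 + 1"] d2 by (simp add: Suc_diff_Suc numeral_2_eq_2)
    also have "(-1::rat)^(q - 1 - d + 1) + (-1)^(q - 2 - d + 1) = 0"
    proof -
      have "q - 2 - d + 1 = (q - 1 - d + 1) - 1" "q - 1 - d + 1 \<ge> 1" using d q3 by auto
      then show ?thesis using neg_pow_cancel[of "q - 1 - d + 1"] by simp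
    qed
    finally show ?thesis by simp
  qed
  finally show ?thesis .
qed

end


context cycb
begin

lemma caseB:
  assumes q3: "q \<ge> 3" and t0: "even (G t0)"
    and nA: "\<not> (\<exists>u<q. \<exists>d. 1 \<le> d \<and> d \<le> q - 2 \<and> (\<forall>t. even (G t) \<longleftrightarrow> (t mod q = u \<or> t mod q = (u + d) mod q)))"
  shows "Phi_e r (c m) j = 0"
proof (rule ccontr)
  assume ne: "Phi_e r (c m) j \<noteq> 0"
  have q2: "q \<ge> 2" using q3 by simp
  obtain k0 where S: "{k. even_entry r (c m) k} = {k0}" using Phi_e_c_card[OF ne] by blast
  have k0: "k0 < q - 1" using S by (auto simp: ee_c[OF q2])
  have H: "even (gapc m k) \<longleftrightarrow> k = k0" if "k < q - 1" for k
    using S that by (auto simp: ee_c[OF q2])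
  show False
  proof (cases "k0 = q - 2")
    case True
    have oddk: "odd (G (m + k))" if "k < q - 2" for k
      using H[of k] that True unfolding gapc_def by simp
    have mer: "even (G (m + (q - 2)) + G (m + (q - 1)))"
      using H[of "q - 2"] True q3 unfolding gapc_def by simp
    show False
    proof (cases "odd (G (m + (q - 2)))")
      case True
      then have "odd (G (m + (q - 1)))" using mer by simp
      note o1 = this
      have "odd (G (m + k))" if "k < q" for k
      proof -
        have "k < q - 2 \<or> k = q - 2 \<or> k = q - 1" using that by linarith
        then consider "k < q - 2" | "k = q - 2" | "k = q - 1" by blast
        then show ?thesis
        proof cases
          case 1 then show ?thesis using oddk by simp
        next
          case 2 then show ?thesis using \<open>odd (G (m + (q - 2)))\<close> by simp
        next
          case 3 then show ?thesis using o1 by simp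
        qed
      qed
      then have "odd (G t0)" by (rule all_odd_from)
      then show False using t0 by simp
    next
      case False
      then have ev2: "even (G (m + (q - 1)))" using mer by simp
      have "even (G (m + k)) \<longleftrightarrow> (k = q - 2 \<or> k = q - 1)" if "k < q" for k
      proof -
        have "k < q - 2 \<or> k = q - 2 \<or> k = q - 1" using that by linarith
        then consider "k < q - 2" | "k = q - 2" | "k = q - 1" by blast
        then show ?thesis
        proof cases
          case 1 then show ?thesis using oddk[of k] by simp
        next
          case 2 then show ?thesis using False q3 by simp
        next
          case 3 then show ?thesis using ev2 q3 by simp
        qed
      qed
      then show False using two_to_a[OF q3, of "q - 2" "q - 1" m] nA q3 by auto
    qed
  next
    case False
    then have k0': "k0 < q - 2" using k0 by simp
    have ek0: "even (G (m + k0))" using H[of k0] k0 k0' unfolding gapc_def by simp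
    have oddk: "odd (G (m + k))" if "k < q - 2" "k \<noteq> k0" for k
      using H[of k] that unfolding gapc_def by simp
    have mer: "odd (G (m + (q - 2)) + G (m + (q - 1)))"
      using H[of "q - 2"] False q3 unfolding gapc_def by simp
    define p where "p = (if even (G (m + (q - 2))) then q - 2 else q - 1)"
    have pq: "p < q" "p \<noteq> k0" unfolding p_def using q3 k0' by auto
    have "even (G (m + k)) \<longleftrightarrow> (k = k0 \<or> k = p)" if "k < q" for k
    proof (cases "k < q - 2")
      case True then show ?thesis using oddk[of k] ek0 p_def q3 by auto
    next
      case False
      then have "k = q - 2 \<or> k = q - 1" using that by linarith
      then consider "k = q - 2" | "k = q - 1" by blast
      then show ?thesis
      proof cases
        case 1 then show ?thesis using mer p_def q3 k0' by auto
      next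
        case 2 then show ?thesis using mer p_def q3 k0' by auto
      qed
    qed
    then show False using two_to_a[OF q3 _ pq(1), of k0 m] k0' pq(2) nA by auto
  qed
qed

lemma F_split:
  assumes q2: "q \<ge> 2" and o1: "odd (G x)" and o2: "odd (G (Suc x))"
  shows "phi_e r (B x) (B (Suc (Suc x))) j
       = PP r (B x) (Suc ((G x - 1) div 2)) j + PP r (Suc (B (Suc x))) ((G (Suc x) - 1) div 2) j"
proof -
  obtain a where a: "G x = 2 * a + 1" using o1 oddE by blast
  obtain b' where b': "G (Suc x) = 2 * b' + 1" using o2 oddE by blast
  have d: "dd r (B x) (B (Suc (Suc x))) = G x + G (Suc x)" by (rule dd_two[OF q2])
  have "phi_e r (B x) (B (Suc (Suc x))) j = PP r (B x) (Suc a + b') j"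
    unfolding phi_e_PP d a b' by simp
  also have "\<dots> = PP r (B x) (Suc a) j + PP r (B x + 2 * Suc a) b' j" by (rule PP_add)
  also have "PP r (B x + 2 * Suc a) b' j = PP r (Suc (B (Suc x))) b' j"
  proof (rule PP_cong)
    have "B x + 2 * Suc a = Suc (B x + G x)" using a by simp
    then have "(B x + 2 * Suc a) mod r = Suc ((B x + G x) mod r) mod r" by (simp add: mod_Suc_eq)
    then show "(B x + 2 * Suc a) mod r = Suc (B (Suc x)) mod r" using BG[of x] by simp
  qed
  finally show ?thesis using a b' by simp
qed

lemma all_odd_sum:
  assumes q3: "q \<ge> 3" and qo: "odd q" and ao: "\<And>t. odd (G t)" and jr: "j < r"
  shows "(\<Sum>m<q. Phi_e r (c m) j) = 1"
proof -
  have q2: "q \<ge> 2" using q3 by simp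
  define F where "F x = phi_e r (B x) (B (Suc (Suc x))) j" for x
  have Fp: "F (x + q) = F x" for x
    unfolding F_def using B_add_q[of x] B_add_q[of "Suc (Suc x)"] by simp
  have Pm: "Phi_e r (c m) j = F (q - 2 + m)" for m
  proof -
    have H: "even (gapc m k) \<longleftrightarrow> k = q - 2" if "k < q - 1" for k
      using that ao unfolding gapc_def by auto
    have k0: "q - 2 < q - 1" using q3 by simp
    have e: "Phi_e r (c m) j = (-1)^(q - 2 + 1) * phi_e r (B (m + (q - 2))) (B m) j"
      using Phi_e_c_single[OF q2 k0 H, of j] by simp
    have s: "(-1::rat)^(q - 2 + 1) = 1"
    proof -
      have "even (q - 2 + 1)" using qo q3 by presburger
      then show ?thesis by simp
    qed
    have i: "Suc (Suc (m + (q - 2))) = m + q" using q2 by simp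
    have "B m = B (Suc (Suc (m + (q - 2))))" unfolding i by (rule B_add_q[symmetric])
    then show ?thesis using e s unfolding F_def by (simp add: add.commute)
  qed
  define u where "u t = (G t - 1) div 2" for t
  define g where "g m = PP r (Suc (B m)) (u m) j" for m
  have gp: "g (x + q) = g x" for x unfolding g_def u_def using B_add_q[of x] G_add_q[of x] by simp
  have "(\<Sum>m<q. Phi_e r (c m) j) = (\<Sum>m<q. F (q - 2 + m))" using Pm by simp
  also have "\<dots> = (\<Sum>m<q. F m)" using sum_shift_periodic[of F q "q - 2"] Fp by simp
  also have "\<dots> = (\<Sum>m<q. PP r (B m) (Suc (u m)) j + g (1 + m))"
    unfolding F_def g_def u_def using F_split[OF q2 ao ao] by simp
  also have "\<dots> = (\<Sum>m<q. PP r (B m) (Suc (u m)) j) + (\<Sum>m<q. g (1 + m))" by (simp add: sum.distrib)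
  also have "(\<Sum>m<q. g (1 + m)) = (\<Sum>m<q. g m)" using sum_shift_periodic[of g q 1] gp by simp
  also have "(\<Sum>m<q. PP r (B m) (Suc (u m)) j) + (\<Sum>m<q. g m) = (\<Sum>m<q. QQ r (Suc (B m)) (G m) j)"
  proof -
    have "PP r (B m) (Suc (u m)) j + g m = QQ r (Suc (B m)) (G m) j" for m
    proof -
      obtain kk where kk: "G m = 2 * kk + 1" using ao[of m] oddE by blast
      have "Suc (2 * u m) = G m" unfolding u_def kk by simp
      then show ?thesis unfolding g_def using PP_QQ[of r "B m" "u m" j] by simp
    qed
    then show ?thesis by (simp add: sum.distrib[symmetric])
  qed
  also have "\<dots> = QQ r (Suc (B 0)) (\<Sum>m<q. G m) j" by (rule QQ_tele)
  also have "\<dots> = 1" unfolding sumG using QQ_full[OF jr] .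
  finally show ?thesis .
qed

end


context cycb
begin

lemma odd_case:
  assumes q3: "q \<ge> 3" and qo: "odd q"
  shows "Phi_of_boundary r b j = bdW r q (Phi r b) j"
proof -
  have q2: "q \<ge> 2" using q3 by simp
  have q1: "q \<noteq> 1" "q \<noteq> 0" using q3 by auto
  show ?thesis
  proof (cases "j < r")
    case False
    then have "Phi_of_boundary r b j = 0"
      unfolding PB_def' using Phi_ge[OF r_pos] by simp
    moreover have "bdW r q (Phi r b) j = 0" unfolding bdW_def using q1 qo False by simp
    ultimately show ?thesis by simp
  next
    case jr: True
    define h where "h m = Phi_cyc r (c m) j" for m
    have hp: "h (x + q) = h x" for x unfolding h_def using c_periodic[of x] by simp
    have evc: "even (length (c m))" for m using qo q2 length_c[of m] by simp
    have hc: "h m = cf (q - 1) * Phi_e r (c m) j" for m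
      unfolding h_def using Phi_cyc_even[OF evc c_ne[OF q2]] length_c[of m] by simp
    have sg: "(-1::rat)^i * (-1)^(i * q) = 1" for i
    proof -
      have "(-1::rat)^i * (-1)^(i * q) = (-1)^(i * Suc q)" by (simp add: power_add[symmetric] algebra_simps)
      also have "even (i * Suc q)" using qo by simp
      then have "(-1::rat)^(i * Suc q) = 1" by simp
      finally show ?thesis .
    qed
    have "Phi_of_boundary r b j = (\<Sum>i<q. h (1 + i))"
      unfolding PB_b[OF q2] h_def using sg by simp
    also have "\<dots> = (\<Sum>m<q. h m)" using sum_shift_periodic[of h q 1] hp by simp
    also have "\<dots> = cf (q - 1) * (\<Sum>m<q. Phi_e r (c m) j)" unfolding hc by (simp add: sum_distrib_left)
    finally have LHS: "Phi_of_boundary r b j = cf (q - 1) * (\<Sum>m<q. Phi_e r (c m) j)" .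
    have Pb: "Phi r b k = cf q * Phi_o r b k" for k
      unfolding Phi_b using Phi_cyc_odd[of b k] qo by (simp add: q_def)
    have RHS: "bdW r q (Phi r b) j = cf q * (\<Sum>k<r. Phi_o r b k)"
      unfolding bdW_def using q1 qo jr by (simp add: Pb sum_distrib_left)
    show ?thesis
    proof (cases "\<forall>t. odd (G t)")
      case True
      then have ao: "\<And>t. odd (G t)" by blast
      define u where "u t = (G t - 1) div 2" for t
      have Gu: "G t = 2 * u t + 1" for t
      proof -
        obtain kk where kk: "G t = 2 * kk + 1" using ao[of t] oddE by blast
        show ?thesis unfolding u_def kk by simp
      qed
      have "(\<Sum>k<r. Phi_o r b k) = (\<Sum>k<r. \<Sum>t<q. PP r (Suc (B t)) (u t) k)"
        unfolding Phi_o_b_odd[OF ao] u_def using phi_o_G[OF ao] by simp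
      also have "\<dots> = (\<Sum>t<q. \<Sum>k<r. PP r (Suc (B t)) (u t) k)" by (rule sum.swap)
      also have "\<dots> = (\<Sum>t<q. of_nat (u t))" using sum_PP[OF r_pos] by simp
      finally have s1: "(\<Sum>k<r. Phi_o r b k) = of_nat (\<Sum>t<q. u t)" by simp
      have "r = (\<Sum>t<q. 2 * u t + 1)" using sumG Gu by simp
      also have "\<dots> = 2 * (\<Sum>t<q. u t) + q"
        unfolding sum.distrib sum_distrib_left[symmetric] by simp
      finally have rq: "r = 2 * (\<Sum>t<q. u t) + q" .
      define w where "w = (\<Sum>t<q. u t)"
      have w1: "w \<ge> 1"
      proof -
        have "q \<le> r - 1" by (rule q_le)
        moreover have "odd r" by (rule rodd)
        ultimately have "q \<noteq> r" using q_pos by auto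
        then show ?thesis using rq unfolding w_def by (cases "(\<Sum>t<q. u t)") auto
      qed
      have v1: "varphi r (q - 1) = w" unfolding varphi_def w_def using rq q3 by simp
      have v2: "varphi r q = w - 1" unfolding varphi_def w_def using rq q3 by simp
      have "cf (q - 1) = cf q * of_nat w"
      proof -
        have "fact w = (of_nat w * fact (w - 1) :: rat)" using w1 by (metis fact_num_eq_if not_one_le_zero)
        then show ?thesis unfolding cf_def v1 v2 by simp
      qed
      then show ?thesis unfolding LHS RHS s1 all_odd_sum[OF q3 qo ao jr] w_def by simp
    next
      case False
      then obtain t0 where t0: "even (G t0)" by blast
      have "t0 mod q < q" using q_pos by simp
      moreover have "even (G (t0 mod q))" using t0 G_mod[of t0] by simp
      ultimately have "Phi_o r b k = 0" for k using Phi_o_b_zero by blast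
      then have R0: "bdW r q (Phi r b) j = 0" unfolding RHS by simp
      have "(\<Sum>m<q. Phi_e r (c m) j) = 0"
      proof (cases "\<exists>u<q. \<exists>d. 1 \<le> d \<and> d \<le> q - 2 \<and> (\<forall>t. even (G t) \<longleftrightarrow> (t mod q = u \<or> t mod q = (u + d) mod q))")
        case True
        then obtain u d where "u < q" "1 \<le> d" "d \<le> q - 2" "\<And>t. even (G t) \<longleftrightarrow> (t mod q = u \<or> t mod q = (u + d) mod q)"
          by blast
        then show ?thesis using caseA[OF q3 qo] by blast
      next
        case False
        then show ?thesis using caseB[OF q3 t0 False] by simp
      qed
      then show ?thesis unfolding LHS R0 by simp
    qed
  qed
qed

lemma q1_case:
  assumes q1: "q = 1"
  shows "Phi_of_boundary r b j = bdW r q (Phi r b) j"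
proof -
  have lb1: "length b = 1" using q1 q_def by simp
  have "del 0 b = []" unfolding del_def using lb1 by simp
  then have L: "Phi_of_boundary r b j = grp_rho r 0 j"
    unfolding PB_def' using lb1 by (simp add: Phi_def e0_def)
  have G0: "G t = r" for t
  proof -
    have "G t = G (t mod q)" by (simp add: G_mod)
    also have "t mod q = 0" using q1 by simp
    also have "G 0 = r" using sumG q1 by simp
    finally show ?thesis .
  qed
  have ao: "\<And>t. odd (G t)" using G0 rodd by simp
  have Pb: "Phi r b k = cf 1 * PP r (Suc (B 0)) (rt r) k" for k
  proof -
    have "Phi r b k = cf 1 * Phi_o r b k"
      unfolding Phi_b using Phi_cyc_odd[of b k] lb1 by simp
    also have "Phi_o r b k = PP r (Suc (B 0)) (rt r) k"
      unfolding Phi_o_b_odd[OF ao] using q1 phi_o_G[OF ao, of 0 k] G0[of 0] by (simp add: rt_def)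
    finally show ?thesis .
  qed
  have "(\<Sum>k<r. Phi r b k) = cf 1 * of_nat (rt r)"
    unfolding Pb using sum_PP[OF r_pos] by (simp add: sum_distrib_left[symmetric])
  also have "\<dots> = 1"
  proof -
    have rt1: "rt r \<ge> 1" unfolding rt_def using r3 by simp
    have "varphi r 1 = rt r - 1"
    proof -
      obtain kk where kk: "r = 2 * kk + 1" using rodd oddE by blast
      then have "kk \<ge> 1" using r3 by simp
      then show ?thesis unfolding varphi_def rt_def kk by simp
    qed
    moreover have "fact (rt r) = (of_nat (rt r) * fact (rt r - 1) :: rat)"
      using rt1 by (metis fact_num_eq_if not_one_le_zero)
    ultimately show ?thesis unfolding cf_def using rt1 by simp
  qed
  finally have S: "(\<Sum>k<r. Phi r b k) = 1" .
  show ?thesis unfolding L bdW_def using q1 S by (simp add: grp_rho_def)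
qed

lemma main_cyc: "Phi_of_boundary r b = bdW r q (Phi r b)"
proof
  fix j
  show "Phi_of_boundary r b j = bdW r q (Phi r b) j"
  proof (cases "q = 1")
    case True then show ?thesis by (rule q1_case)
  next
    case False
    show ?thesis
    proof (cases "even q")
      case True then show ?thesis by (rule even_case)
    next
      case odd: False
      then have "q \<ge> 3" using False q_pos by presburger
      then show ?thesis using odd_case odd by blast
    qed
  qed
qed

end

theorem theorem5p1:
  fixes r :: nat and a :: "nat list"
  assumes "r \<ge> 3" and "odd r"
    and "distinct a" and "set a \<subseteq> {..<r}" and "length a \<le> r - 1"
  shows "Phi_of_boundary r a = bdW r (length a) (Phi r a)"
proof (rule reduce_to_sorted[OF _ assms(3) assms(4) refl])
  fix b assume sb: "sorted_wrt (<) b" "set b \<subseteq> {..<r}" "length b = length a"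
  show "Phi_of_boundary r b = bdW r (length a) (Phi r b)"
  proof (cases "b = []")
    case True
    then show ?thesis using sb(3) by (auto simp: Phi_of_boundary_def bdW_def)
  next
    case False
    have cb: "cyclically_ordered r b" using sorted_cyc[OF sb(1) False sb(2)] .
    interpret C: cycb r b
      using assms(1,2,5) cb sb by unfold_locales auto
    show ?thesis using C.main_cyc sb(3) unfolding C.q_def by simp
  qed
qed


end
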